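(* Let $V$ be a real vector space of odd finite dimension and $G\le\mathrm{GL}(V)$ a finite group such that $V$ is an irreducible $\mathbb{R}G$-module. Let $H$ be a characteristic subgroup of $G$ and let $S$ be an irreducible $\mathbb{R}H$-submodule of $V$. If the pair $(H,S)$ has the $E1$-property, then the pair $(G,V)$ has the $E1$-property.
   Context: For a finite group $G$, a finite-dimensional $\mathbb{R}G$-module $V$ with representation $\rho\colon G\to\mathrm{GL}(V)$, and $n\in\mathrm{GL}(V)$ of finite order normalizing $\rho(G)$, the triple $(G,V,n)$ has the $E1$-property if there is $g\in G$ such that $\rho(g)n$ has eigenvalue $1$. The pair $(G,V)$ has the $E1$-property if $(G,V,n')$ has the $E1$-property for every $n'\in\mathrm{GL}(V)$ of finite order normalizing $\rho(G)$. *)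

theory Defs
  imports "HOL-Analysis.Analysis"
begin

text \<open>V = real^'n; GL(V) realised as invertible real matrices; the
representation of a matrix group is the inclusion (action by matrix-vector product).\<close>

definition matrix_group :: "(real^'n^'n) set \<Rightarrow> bool" where
  "matrix_group G \<longleftrightarrow> (\<forall>g\<in>G. invertible g) \<and> mat 1 \<in> G \<and>
     (\<forall>x\<in>G. \<forall>y\<in>G. x ** y \<in> G) \<and> (\<forall>x\<in>G. matrix_inv x \<in> G)"

definition matrix_subgroup :: "(real^'n^'n) set \<Rightarrow> (real^'n^'n) set \<Rightarrow> bool" where
  "matrix_subgroup H G \<longleftrightarrow> H \<subseteq> G \<and> matrix_group H"

text \<open>Characteristic subgroup: invariant under every group automorphism of G.\<close>
definition characteristic_subgroup :: "(real^'n^'n) set \<Rightarrow> (real^'n^'n) set \<Rightarrow> bool" where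
  "characteristic_subgroup H G \<longleftrightarrow> matrix_subgroup H G \<and>
     (\<forall>\<phi>. bij_betw \<phi> G G \<and> (\<forall>x\<in>G. \<forall>y\<in>G. \<phi> (x ** y) = \<phi> x ** \<phi> y) \<longrightarrow> \<phi> ` H = H)"

text \<open>W is a K-invariant subspace (an RK-submodule of V).\<close>
definition invariant_subspace :: "(real^'n^'n) set \<Rightarrow> (real^'n) set \<Rightarrow> bool" where
  "invariant_subspace K W \<longleftrightarrow> subspace W \<and> (\<forall>k\<in>K. (\<lambda>x. k *v x) ` W \<subseteq> W)"

text \<open>W is an irreducible RK-submodule of V.\<close>
definition irreducible_submodule :: "(real^'n^'n) set \<Rightarrow> (real^'n) set \<Rightarrow> bool" where
  "irreducible_submodule K W \<longleftrightarrow> invariant_subspace K W \<and> W \<noteq> {0} \<and>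
     (\<forall>U. invariant_subspace K U \<and> U \<subseteq> W \<longrightarrow> U = {0} \<or> U = W)"

text \<open>f induces an element of GL(W) (f linear, restricting to a bijection of W).\<close>
definition GL_on :: "(real^'n) set \<Rightarrow> (real^'n \<Rightarrow> real^'n) \<Rightarrow> bool" where
  "GL_on W f \<longleftrightarrow> linear f \<and> f ` W = W \<and> inj_on f W"

definition finite_order_on :: "(real^'n) set \<Rightarrow> (real^'n \<Rightarrow> real^'n) \<Rightarrow> bool" where
  "finite_order_on W f \<longleftrightarrow> (\<exists>m>0. \<forall>x\<in>W. (f ^^ m) x = x)"

text \<open>f normalizes the image of K in GL(W): f \<rho>(K) f^{-1} = \<rho>(K), where \<rho>(k) is the
restriction of k to W.  Written as equality of the sets of restricted maps.\<close>
definition normalizes_on :: "(real^'n) set \<Rightarrow> (real^'n \<Rightarrow> real^'n) \<Rightarrow> (real^'n^'n) set \<Rightarrow> bool" where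
  "normalizes_on W f K \<longleftrightarrow>
     (\<forall>k\<in>K. \<exists>k'\<in>K. \<forall>x\<in>W. f (k *v x) = k' *v (f x)) \<and>
     (\<forall>k'\<in>K. \<exists>k\<in>K. \<forall>x\<in>W. f (k *v x) = k' *v (f x))"

text \<open>E1-property of the triple (K, W, f): some \<rho>(k) f has eigenvalue 1 on W.\<close>
definition E1_triple :: "(real^'n^'n) set \<Rightarrow> (real^'n) set \<Rightarrow> (real^'n \<Rightarrow> real^'n) \<Rightarrow> bool" where
  "E1_triple K W f \<longleftrightarrow> (\<exists>k\<in>K. \<exists>x\<in>W. x \<noteq> 0 \<and> k *v (f x) = x)"

text \<open>E1-property of the pair (K, W).\<close>
definition E1_pair :: "(real^'n^'n) set \<Rightarrow> (real^'n) set \<Rightarrow> bool" where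
  "E1_pair K W \<longleftrightarrow> (\<forall>f. GL_on W f \<and> finite_order_on W f \<and> normalizes_on W f K \<longrightarrow> E1_triple K W f)"

end

theory Submission
  imports Defs
begin

(* ---- from d1/Eig.thy ---- *)

lemma det_scaleR_gen: "det (c *\<^sub>R (A::real^'m^'m)) = c ^ CARD('m) * det A"
proof -
  have "det (c *\<^sub>R A) = (\<Sum>p\<in>{p. p permutes UNIV}. of_int (sign p) * (\<Prod>i\<in>UNIV. c * A $ i $ p i))"
    unfolding det_def by simp
  also have "\<dots> = (\<Sum>p\<in>{p. p permutes UNIV}. c ^ CARD('m) * (of_int (sign p) * (\<Prod>i\<in>UNIV. A $ i $ p i)))"
    by (simp add: prod.distrib mult_ac)
  also have "\<dots> = c ^ CARD('m) * det A"
    unfolding det_def by (simp add: sum_distrib_left)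
  finally show ?thesis .
qed

lemma cont_det_family:
  fixes F :: "real \<Rightarrow> 'm::finite \<Rightarrow> 'm \<Rightarrow> real"
  assumes "\<And>i j. continuous_on UNIV (\<lambda>t. F t i j)"
  shows "continuous_on UNIV (\<lambda>t. det (\<chi> i j. F t i j :: real^'m^'m))"
  unfolding det_def using assms by (auto intro!: continuous_intros)

lemma odd_eigen:
  fixes L :: "real^'m \<Rightarrow> real^'m"
  assumes lin: "linear L" and odd: "odd CARD('m)"
  shows "\<exists>v c. v \<noteq> 0 \<and> L v = c *\<^sub>R v"
proof -
  define A where "A t = matrix (\<lambda>v. L v - t *\<^sub>R v)" for t
  define B where "B t = matrix (\<lambda>v. v - t *\<^sub>R L v)" for t
  have Aeq: "A t = (\<chi> i j. L (axis j 1) $ i - t * axis j 1 $ i)" for t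
    unfolding A_def matrix_def by simp
  have Beq: "B t = (\<chi> i j. axis j 1 $ i - t * L (axis j 1) $ i)" for t
    unfolding B_def matrix_def by simp
  have contA: "continuous_on UNIV (\<lambda>t. det (A t))"
    unfolding Aeq by (rule cont_det_family) (auto intro!: continuous_intros)
  have contB: "continuous_on UNIV (\<lambda>t. det (B t))"
    unfolding Beq by (rule cont_det_family) (auto intro!: continuous_intros)
  have B0: "det (B 0) = 1"
    unfolding B_def using matrix_id by (simp add: id_def)
  have AB: "A t = (- t) *\<^sub>R B (1 / t)" if "t \<noteq> 0" for t
    unfolding Aeq Beq using that by (simp add: vec_eq_iff field_simps)
  have "isCont (\<lambda>t. det (B t)) 0"
    using contB by (simp add: continuous_on_eq_continuous_at)
  then obtain d where d: "d > 0" "\<And>t. dist t 0 < d \<Longrightarrow> dist (det (B t)) (det (B 0)) < 1/2"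
    unfolding continuous_at_eps_delta by (metis half_gt_zero zero_less_one)
  have Bpos: "det (B t) > 0" if "\<bar>t\<bar> < d" for t
    using d(2)[of t] that B0 by (auto simp: dist_real_def abs_if split: if_splits)
  define t1 where "t1 = 2 / d"
  have t1: "t1 > 0" "\<bar>1/t1\<bar> < d" using d by (auto simp: t1_def)
  have "det (A t1) = det ((- t1) *\<^sub>R B (1/t1))"
    using AB[of t1] t1 by simp
  also have "\<dots> = (- t1) ^ CARD('m) * det (B (1/t1))"
    by (rule det_scaleR_gen)
  also have "\<dots> < 0"
  proof -
    have "(- t1) ^ CARD('m) < 0" using odd t1 by (simp add: power_minus_odd)
    moreover have "det (B (1/t1)) > 0" using Bpos t1 by simp
    ultimately show ?thesis by (simp add: mult_neg_pos)
  qed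
  finally have n1: "det (A t1) < 0" .
  have t2: "-t1 < 0" "\<bar>1/(-t1)\<bar> < d" using t1 by auto
  have "det (A (-t1)) = det ((- (- t1)) *\<^sub>R B (1/(-t1)))"
    using AB[of "-t1"] t1 by simp
  also have "\<dots> = t1 ^ CARD('m) * det (B (1/(-t1)))"
    by (simp add: det_scaleR_gen)
  also have "\<dots> > 0"
    using Bpos[OF t2(2)] t1 by simp
  finally have p2: "det (A (-t1)) > 0" .
  obtain c where c: "det (A c) = 0"
    using IVT2'[of "\<lambda>t. det (A t)" t1 0 "-t1"] n1 p2 t1 contA
    by (auto intro: continuous_on_subset)
  have linc: "linear (\<lambda>v. L v - c *\<^sub>R v)"
    using lin unfolding linear_iff by (auto simp: algebra_simps)
  have "\<not> inj (\<lambda>v. L v - c *\<^sub>R v)"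
    using det_nz_iff_inj[OF linc] c unfolding A_def by simp
  then obtain v where "v \<noteq> 0" "L v - c *\<^sub>R v = 0"
    using linear_inj_iff_eq_0[OF linc] by auto
  then show ?thesis by auto
qed

lemma orth_proj_exists:
  fixes A :: "'a::euclidean_space set"
  assumes "subspace A"
  shows "\<exists>p. linear p \<and> (\<forall>v. p v \<in> A) \<and> (\<forall>v. \<forall>w\<in>A. orthogonal (v - p v) w)"
proof -
  have ex: "\<exists>y. y \<in> A \<and> (\<forall>w\<in>A. orthogonal (v - y) w)" for v
  proof -
    obtain y z where "y \<in> span A" "\<And>w. w \<in> span A \<Longrightarrow> orthogonal z w" "v = y + z"
      using orthogonal_subspace_decomp_exists[of A v] by blast
    moreover have "span A = A" using assms by (simp add: span_eq_iff)
    ultimately show ?thesis by (auto intro!: exI[of _ y])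
  qed
  define p where "p v = (SOME y. y \<in> A \<and> (\<forall>w\<in>A. orthogonal (v - y) w))" for v
  have p: "p v \<in> A \<and> (\<forall>w\<in>A. orthogonal (v - p v) w)" for v
    unfolding p_def using someI_ex[OF ex] .
  have uniq: "p v = y" if "y \<in> A" "\<forall>w\<in>A. orthogonal (v - y) w" for v y
  proof -
    have "p v - y \<in> A" using p that assms by (simp add: subspace_diff)
    moreover have "orthogonal (v - y) (p v - y)" "orthogonal (v - p v) (p v - y)"
      using p that \<open>p v - y \<in> A\<close> by auto
    ultimately have "orthogonal (p v - y) (p v - y)"
      unfolding orthogonal_def by (simp add: inner_diff_left)
    then have "p v - y = 0" by (simp add: orthogonal_def)
    then show ?thesis by simp
  qed
  have "linear p"
  proof (rule linearI)
    fix x y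
    show "p (x + y) = p x + p y"
    proof (rule uniq)
      show "p x + p y \<in> A" using p assms by (simp add: subspace_add)
      show "\<forall>w\<in>A. orthogonal (x + y - (p x + p y)) w"
      proof
        fix w assume "w \<in> A"
        then have "orthogonal (x - p x) w" "orthogonal (y - p y) w" using p by auto
        moreover have "x + y - (p x + p y) = (x - p x) + (y - p y)" by simp
        ultimately show "orthogonal (x + y - (p x + p y)) w"
          unfolding orthogonal_def by (simp only: inner_add_left) simp?
      qed
    qed
  next
    fix c x
    show "p (c *\<^sub>R x) = c *\<^sub>R p x"
    proof (rule uniq)
      show "c *\<^sub>R p x \<in> A" using p assms by (simp add: subspace_scale)
      show "\<forall>w\<in>A. orthogonal (c *\<^sub>R x - c *\<^sub>R p x) w"
      proof
        fix w assume "w \<in> A"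
        then have "orthogonal (x - p x) w" using p by auto
        moreover have "c *\<^sub>R x - c *\<^sub>R p x = c *\<^sub>R (x - p x)" by (simp add: scaleR_diff_right)
        ultimately show "orthogonal (c *\<^sub>R x - c *\<^sub>R p x) w"
          unfolding orthogonal_def by (simp only: inner_scaleR_left) simp?
      qed
    qed
  qed
  then show ?thesis using p by blast
qed

lemma orth_proj_id:
  fixes A :: "'a::euclidean_space set"
  assumes "subspace A" "\<forall>v. p v \<in> A" "\<forall>v. \<forall>w\<in>A. orthogonal (v - p v) w" "a \<in> A"
  shows "p a = a"
proof -
  have "a - p a \<in> A" using assms by (simp add: subspace_diff)
  then have "orthogonal (a - p a) (a - p a)" using assms by auto
  then have "a - p a = 0" by (simp add: orthogonal_def)
  then show ?thesis by simp
qed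

lemma complex_structure_exists:
  fixes C :: "'a::euclidean_space set"
  assumes "subspace C" "even (dim C)"
  shows "\<exists>J. linear J \<and> (\<forall>c\<in>C. J c \<in> C \<and> J (J c) = - c)"
proof -
  obtain B where B: "B \<subseteq> C" "independent B" "C \<subseteq> span B" "card B = dim C"
    by (rule basis_exists)
  have fB: "finite B" using independent_bound_general[OF B(2)] by blast
  obtain bs where bs: "set bs = B" "distinct bs" using finite_distinct_list[OF fB] by blast
  have "length bs = dim C" using distinct_card[OF bs(2)] bs(1) B(4) by simp
  then have len: "even (length bs)" using assms(2) by simp
  define ix where "ix v = inv_into {..<length bs} ((!) bs) v" for v
  have ixnth: "ix (bs ! i) = i" if "i < length bs" for i
    unfolding ix_def using that bs(2) by (auto intro!: inv_into_f_f inj_on_nth)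
  define f where "f v = (if even (ix v) then bs ! (ix v + 1) else - (bs ! (ix v - 1)))" for v
  obtain J where J: "linear J" "\<And>x. x \<in> B \<Longrightarrow> J x = f x"
    using linear_independent_extend[OF B(2), of f] by blast
  have Jnth: "J (bs ! i) = (if even i then bs ! (i + 1) else - (bs ! (i - 1)))" if "i < length bs" for i
    using J(2)[of "bs ! i"] that bs(1) ixnth[OF that] unfolding f_def by auto
  have JJ: "J (J x) = - x" if xB: "x \<in> B" for x
  proof -
    obtain i where i: "i < length bs" "x = bs ! i" using xB bs(1) by (auto simp: in_set_conv_nth)
    show ?thesis
    proof (cases "even i")
      case True
      then have "i + 1 < length bs" using len i(1) by (metis Suc_eq_plus1 Suc_lessI even_Suc)
      then show ?thesis using Jnth[OF i(1)] Jnth[of "i+1"] True i by simp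
    next
      case False
      then have "i - 1 < length bs" "even (i - 1)" using i(1) by auto
      moreover have "i - 1 + 1 = i" using False by (cases i) auto
      ultimately show ?thesis using Jnth[OF i(1)] Jnth[of "i - 1"] False i J(1)
        by (simp add: linear_neg)
    qed
  qed
  have JB: "J x \<in> C" if xB: "x \<in> B" for x
  proof -
    obtain i where i: "i < length bs" "x = bs ! i" using xB bs(1) by (auto simp: in_set_conv_nth)
    show ?thesis
    proof (cases "even i")
      case True
      then have "i + 1 < length bs" using len i(1) by (metis Suc_eq_plus1 Suc_lessI even_Suc)
      then show ?thesis using Jnth[OF i(1)] True i B(1) bs(1) by (auto simp: nth_mem subset_iff)
    next
      case False
      then have "i - 1 < length bs" using i(1) by auto
      then show ?thesis using Jnth[OF i(1)] False i B(1) bs(1) assms(1)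
        by (auto simp: nth_mem subset_iff intro: subspace_neg)
    qed
  qed
  have spanC: "span B = C"
    by (rule subset_antisym[OF span_minimal[OF B(1) assms(1)] B(3)])
  have "J c \<in> C \<and> J (J c) = - c" if "c \<in> C" for c
  proof
    have "J ` B \<subseteq> C" using JB by blast
    then have "span (J ` B) \<subseteq> C" by (rule span_minimal[OF _ assms(1)])
    then have "J ` span B \<subseteq> C" using span_linear_image[OF J(1), of B] by simp
    then show "J c \<in> C" using that spanC by auto
    have l1: "linear (\<lambda>x. J (J x))" using J(1) by (simp add: linear_compose[unfolded o_def])
    have l2: "linear (\<lambda>x. - x)" by (simp add: linear_uminus)
    show "J (J c) = - c"
      using real_vector.linear_eq_on_span[OF l1 l2, of B c] JJ that spanC by auto
  qed
  then show ?thesis using J(1) by blast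
qed

lemma odd_eigen_sub:
  fixes L :: "real^'m \<Rightarrow> real^'m"
  assumes lin: "linear L" and odd: "odd CARD('m)" and A: "subspace A" and oddA: "odd (dim A)"
    and inv: "\<forall>a\<in>A. L a \<in> A"
  shows "\<exists>v\<in>A. v \<noteq> 0 \<and> (\<exists>c. L v = c *\<^sub>R v)"
proof -
  define C where "C = {y. \<forall>x\<in>A. orthogonal x y}"
  have sC: "subspace C" unfolding C_def by (rule subspace_orthogonal_to_vectors)
  have "dim C + dim A = CARD('m)"
    using dim_subspace_orthogonal_to_vectors[OF A subspace_UNIV, of] unfolding C_def by simp
  then have eC: "even (dim C)" using odd oddA by presburger
  obtain J where J: "linear J" "\<And>c. c \<in> C \<Longrightarrow> J c \<in> C \<and> J (J c) = - c"
    using complex_structure_exists[OF sC eC] by blast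
  obtain p where p: "linear p" "\<forall>v. p v \<in> A" "\<forall>v. \<forall>w\<in>A. orthogonal (v - p v) w"
    using orth_proj_exists[OF A] by blast
  have wC: "v - p v \<in> C" for v using p(3) unfolding C_def by (simp add: orthogonal_commute)
  define L' where "L' v = L (p v) + J (v - p v)" for v
  have "linear L'"
  proof (rule linearI)
    fix x y
    have e: "x + y - p (x + y) = (x - p x) + (y - p y)" using linear_add[OF p(1)] by simp
    show "L' (x + y) = L' x + L' y"
      unfolding L'_def e using linear_add[OF p(1)] linear_add[OF lin] linear_add[OF J(1)] by simp
  next
    fix r x
    have e: "r *\<^sub>R x - p (r *\<^sub>R x) = r *\<^sub>R (x - p x)" using linear_scale[OF p(1)] by (simp add: scaleR_diff_right)
    show "L' (r *\<^sub>R x) = r *\<^sub>R L' x"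
      unfolding L'_def e using linear_scale[OF p(1)] linear_scale[OF lin] linear_scale[OF J(1)] by (simp add: scaleR_right_distrib)
  qed
  obtain v c where v: "v \<noteq> 0" "L' v = c *\<^sub>R v" using odd_eigen[OF \<open>linear L'\<close> odd] by blast
  define a where "a = p v"
  define w where "w = v - p v"
  have aA: "a \<in> A" unfolding a_def using p by auto
  have wC': "w \<in> C" unfolding w_def by (rule wC)
  have vaw: "v = a + w" unfolding a_def w_def by simp
  have "L' v = L a + J w" unfolding L'_def a_def w_def by simp
  moreover have "c *\<^sub>R v = c *\<^sub>R a + c *\<^sub>R w" using vaw by (simp add: scaleR_right_distrib)
  ultimately have "L a + J w = c *\<^sub>R a + c *\<^sub>R w" using v(2) by simp
  then have eq: "L a - c *\<^sub>R a = c *\<^sub>R w - J w" by (simp add: algebra_simps)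
  have "L a - c *\<^sub>R a \<in> A" using inv aA A by (simp add: subspace_diff subspace_scale)
  moreover have "c *\<^sub>R w - J w \<in> C" using J(2)[OF wC'] wC' sC by (simp add: subspace_diff subspace_scale)
  ultimately have "L a - c *\<^sub>R a \<in> A \<inter> C" using eq by simp
  then have z: "L a - c *\<^sub>R a = 0" unfolding C_def by (auto simp: orthogonal_def)
  then have Jw: "J w = c *\<^sub>R w" using eq by simp
  have "w = 0"
  proof (rule ccontr)
    assume "w \<noteq> 0"
    have "J (J w) = c *\<^sub>R J w" using Jw J(1) by (simp add: linear_scale)
    then have "- w = (c * c) *\<^sub>R w" using J(2)[OF wC'] Jw by simp
    then have h: "(c * c) *\<^sub>R w = - w" by simp
    have "(c * c + 1) *\<^sub>R w = (c * c) *\<^sub>R w + w" by (simp add: scaleR_add_left)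
    then have "(c * c + 1) *\<^sub>R w = 0" using h by simp
    moreover have "c * c + 1 \<noteq> 0" using zero_le_square[of c] by linarith
    ultimately show False using \<open>w \<noteq> 0\<close> by simp
  qed
  then show ?thesis using aA v(1) z vaw by (intro bexI[of _ a]) auto
qed

definition vflat :: "real^'n^'n \<Rightarrow> real^('n\<times>'n)" where "vflat M = (\<chi> ij. M $ fst ij $ snd ij)"
definition vunflat :: "real^('n\<times>'n) \<Rightarrow> real^'n^'n" where "vunflat w = (\<chi> i j. w $ (i,j))"

lemma vunflat_vflat[simp]: "vunflat (vflat M) = M"
  unfolding vflat_def vunflat_def by (simp add: vec_eq_iff)
lemma vflat_vunflat[simp]: "vflat (vunflat w) = w"
  unfolding vflat_def vunflat_def by (simp add: vec_eq_iff)
lemma linear_vflat: "linear vflat"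
  by (rule linearI) (simp_all add: vflat_def vec_eq_iff)
lemma linear_vunflat: "linear vunflat"
  by (rule linearI) (simp_all add: vunflat_def vec_eq_iff)

lemma odd_eigen_mat:
  fixes T :: "real^'n^'n \<Rightarrow> real^'n^'n"
  assumes lin: "linear T" and odd: "odd CARD('n)" and E: "subspace E" and oddE: "odd (dim E)"
    and inv: "\<forall>M\<in>E. T M \<in> E"
  shows "\<exists>M\<in>E. M \<noteq> 0 \<and> (\<exists>c. T M = c *\<^sub>R M)"
proof -
  define L where "L w = vflat (T (vunflat w))" for w
  have linL: "linear L" unfolding L_def
    using linear_compose[OF linear_compose[OF linear_vunflat lin] linear_vflat] by (simp add: o_def)
  have oddc: "odd CARD('n \<times> 'n)" using odd by simp
  have spE: "span E = E" using E by (simp add: span_eq_iff)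
  have sA: "subspace (vflat ` E)"
    by (metis span_linear_image[OF linear_vflat] spE subspace_span)
  have injv: "inj_on vflat (span E)" by (metis inj_on_inverseI vunflat_vflat)
  have "dim (vflat ` E) = dim E" by (rule dim_image_eq[OF linear_vflat injv])
  then have oA: "odd (dim (vflat ` E))" using oddE by simp
  have invA: "\<forall>a\<in>vflat ` E. L a \<in> vflat ` E" using inv unfolding L_def by auto
  obtain v c where v: "v \<in> vflat ` E" "v \<noteq> 0" "L v = c *\<^sub>R v"
    using odd_eigen_sub[OF linL oddc sA oA invA] by blast
  then obtain M where M: "M \<in> E" "v = vflat M" by blast
  have "T M = vunflat (L v)" unfolding L_def M by simp
  also have "\<dots> = c *\<^sub>R M" using v(3) M(2) linear_scale[OF linear_vunflat, of c "vflat M"] by simp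
  finally have "T M = c *\<^sub>R M" .
  moreover have "M \<noteq> 0" using v(2) M(2) linear_0[OF linear_vflat] by auto
  ultimately show ?thesis using M(1) by blast
qed


(* ---- from d2/Rep.thy ---- *)

lemma minv: assumes "invertible (A::real^'n^'n)"
  shows "A ** matrix_inv A = mat 1" "matrix_inv A ** A = mat 1"
proof -
  have "\<exists>A'. A ** A' = mat 1 \<and> A' ** A = mat 1" using assms unfolding invertible_def by blast
  then have "A ** matrix_inv A = mat 1 \<and> matrix_inv A ** A = mat 1"
    unfolding matrix_inv_def by (rule someI_ex)
  then show "A ** matrix_inv A = mat 1" "matrix_inv A ** A = mat 1" by auto
qed

lemma minv_unique: assumes "(A::real^'n^'n) ** B = mat 1" shows "matrix_inv A = B"
proof -
  have BA: "B ** A = mat 1" using assms matrix_left_right_inverse by blast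
  then have "invertible A" unfolding invertible_def using assms by blast
  then have "A ** matrix_inv A = mat 1" by (rule minv)
  then have "B ** (A ** matrix_inv A) = B" by (simp add: matrix_mul_rid)
  then show ?thesis by (simp add: matrix_mul_assoc BA matrix_mul_lid)
qed

lemma mv_sum: "(A::real^'n^'m) *v sum f S = (\<Sum>x\<in>S. A *v f x)"
  using linear_sum[OF matrix_vector_mul_linear, of A f S] by (simp add: o_def)

lemma mv_scale: "(A::real^'n^'m) *v (c *\<^sub>R x) = c *\<^sub>R (A *v x)"
  using linear_scale[OF matrix_vector_mul_linear] by blast

lemma matrix_eqI: "(\<And>v. (A::real^'n^'m) *v v = B *v v) \<Longrightarrow> A = B"
  by (simp add: matrix_eq)

definition eqproj :: "(real^'n^'n) set \<Rightarrow> (real^'n) set \<Rightarrow> (real^'n \<Rightarrow> real^'n) \<Rightarrow> bool" where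
  "eqproj K U P \<longleftrightarrow> linear P \<and> (\<forall>v. P v \<in> U) \<and> (\<forall>u\<in>U. P u = u) \<and> (\<forall>k\<in>K. \<forall>v. P (k *v v) = k *v P v)"

locale fgroup =
  fixes H :: "(real^'n^'n) set"
  assumes grp: "matrix_group H" and fin: "finite H"
begin

lemma inv_in: "h \<in> H \<Longrightarrow> matrix_inv h \<in> H"
  using grp unfolding matrix_group_def by blast
lemma mul_in: "h \<in> H \<Longrightarrow> k \<in> H \<Longrightarrow> h ** k \<in> H"
  using grp unfolding matrix_group_def by blast
lemma one_in: "mat 1 \<in> H"
  using grp unfolding matrix_group_def by blast
lemma invertible_in: "h \<in> H \<Longrightarrow> invertible h"
  using grp unfolding matrix_group_def by blast
lemma hinv: "h \<in> H \<Longrightarrow> h ** matrix_inv h = mat 1" "h \<in> H \<Longrightarrow> matrix_inv h ** h = mat 1"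
  using minv invertible_in by blast+
lemma hinv_v: "h \<in> H \<Longrightarrow> matrix_inv h *v (h *v v) = v" "h \<in> H \<Longrightarrow> h *v (matrix_inv h *v v) = v"
  using hinv by (simp_all add: matrix_vector_mul_assoc matrix_vector_mul_lid)
lemma card_pos: "card H > 0"
  using fin one_in card_gt_0_iff by blast

lemma maschke:
  assumes U: "invariant_subspace H U"
  shows "\<exists>P. eqproj H U P"
proof -
  have sU: "subspace U" and iU: "\<And>h u. h \<in> H \<Longrightarrow> u \<in> U \<Longrightarrow> h *v u \<in> U"
    using U unfolding invariant_subspace_def by auto
  obtain p where p: "linear p" "\<forall>v. p v \<in> U" "\<forall>v. \<forall>w\<in>U. orthogonal (v - p v) w"
    using orth_proj_exists[OF sU] by blast
  have pid: "p u = u" if "u \<in> U" for u using orth_proj_id[OF sU p(2,3) that] .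
  define F where "F v (h::real^'n^'n) = h *v p (matrix_inv h *v v)" for v h
  define P where "P v = inverse (real (card H)) *\<^sub>R (\<Sum>h\<in>H. F v h)" for v
  have linP: "linear P"
  proof (rule linearI)
    fix x y
    have "F (x + y) h = F x h + F y h" for h
      unfolding F_def by (simp add: matrix_vector_right_distrib linear_add[OF p(1)])
    then show "P (x + y) = P x + P y" unfolding P_def by (simp add: sum.distrib scaleR_right_distrib)
  next
    fix c x
    have "F (c *\<^sub>R x) h = c *\<^sub>R F x h" for h
      unfolding F_def by (simp add: mv_scale linear_scale[OF p(1)])
    then show "P (c *\<^sub>R x) = c *\<^sub>R P x" unfolding P_def by (simp add: scaleR_sum_right mult.commute)
  qed
  have PU: "P v \<in> U" for v
  proof -
    have "F v h \<in> U" if "h \<in> H" for h unfolding F_def using iU[OF that] p(2) by blast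
    then have "(\<Sum>h\<in>H. F v h) \<in> U" using sU by (simp add: subspace_sum)
    then show ?thesis unfolding P_def using sU by (simp add: subspace_scale)
  qed
  have Pid: "P u = u" if "u \<in> U" for u
  proof -
    have "F u h = u" if "h \<in> H" for h
    proof -
      have "matrix_inv h *v u \<in> U" using iU[OF inv_in[OF that] \<open>u \<in> U\<close>] .
      then show ?thesis unfolding F_def using pid hinv_v(2)[OF that] by simp
    qed
    then have "(\<Sum>h\<in>H. F u h) = (\<Sum>h\<in>H. u)" by simp
    then have "(\<Sum>h\<in>H. F u h) = real (card H) *\<^sub>R u" by (simp only: sum_constant_scaleR)
    then show ?thesis unfolding P_def using card_pos by simp
  qed
  have Peq: "P (k *v v) = k *v P v" if k: "k \<in> H" for k v
  proof -
    have bij: "bij_betw (\<lambda>h. k ** h) H H"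
    proof (rule bij_betw_imageI)
      show "inj_on ((**) k) H"
      proof (rule inj_onI)
        fix x y assume "x \<in> H" "y \<in> H" "k ** x = k ** y"
        then have "matrix_inv k ** (k ** x) = matrix_inv k ** (k ** y)" by simp
        then show "x = y" using hinv(2)[OF k] by (simp add: matrix_mul_assoc matrix_mul_lid)
      qed
      show "(**) k ` H = H"
      proof
        show "(**) k ` H \<subseteq> H" using mul_in[OF k] by blast
        show "H \<subseteq> (**) k ` H"
        proof
          fix y assume y: "y \<in> H"
          have "y = k ** (matrix_inv k ** y)" using hinv(1)[OF k] by (simp add: matrix_mul_assoc matrix_mul_lid)
          then show "y \<in> (**) k ` H" using mul_in[OF inv_in[OF k] y] by blast
        qed
      qed
    qed
    have Fk: "F (k *v v) (k ** h) = k *v F v h" if h: "h \<in> H" for h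
    proof -
      have "(k ** h) ** (matrix_inv h ** matrix_inv k) = mat 1"
        using hinv(1)[OF h] hinv(1)[OF k]
        by (metis matrix_mul_assoc matrix_mul_lid)
      then have mi: "matrix_inv (k ** h) = matrix_inv h ** matrix_inv k" by (rule minv_unique)
      have "matrix_inv (k ** h) *v (k *v v) = matrix_inv h *v v"
        unfolding mi using hinv_v(1)[OF k] by (simp flip: matrix_vector_mul_assoc)
      then show ?thesis unfolding F_def by (simp flip: matrix_vector_mul_assoc)
    qed
    have "(\<Sum>h\<in>H. F (k *v v) h) = (\<Sum>h\<in>H. F (k *v v) (k ** h))"
      using sum.reindex_bij_betw[OF bij, of "F (k *v v)"] by simp
    also have "\<dots> = (\<Sum>h\<in>H. k *v F v h)" using Fk by simp
    also have "\<dots> = k *v (\<Sum>h\<in>H. F v h)" by (simp add: mv_sum)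
    finally show ?thesis unfolding P_def by (simp add: mv_scale)
  qed
  show ?thesis unfolding eqproj_def using linP PU Pid Peq by blast
qed


lemma inv_kernel:
  assumes "invariant_subspace H A" "eqproj H U P"
  shows "invariant_subspace H {a\<in>A. P a = 0}"
proof -
  have lin: "linear P" using assms(2) unfolding eqproj_def by blast
  have sA: "subspace A" using assms(1) unfolding invariant_subspace_def by blast
  have "subspace {a\<in>A. P a = 0}"
    unfolding subspace_def
  proof (intro conjI ballI allI)
    show "0 \<in> {a \<in> A. P a = 0}" using sA linear_0[OF lin] by (simp add: subspace_0)
    fix x y assume "x \<in> {a \<in> A. P a = 0}" "y \<in> {a \<in> A. P a = 0}"
    then show "x + y \<in> {a \<in> A. P a = 0}" using sA linear_add[OF lin, of x y] by (simp add: subspace_add)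
  next
    fix c x assume "x \<in> {a \<in> A. P a = 0}"
    then show "c *\<^sub>R x \<in> {a \<in> A. P a = 0}" using sA linear_scale[OF lin, of c x] by (simp add: subspace_scale)
  qed
  moreover have "\<forall>h\<in>H. (\<lambda>x. h *v x) ` {a\<in>A. P a = 0} \<subseteq> {a\<in>A. P a = 0}"
    using assms unfolding invariant_subspace_def eqproj_def by auto
  ultimately show ?thesis unfolding invariant_subspace_def by blast
qed

lemma irred_exists:
  assumes A: "invariant_subspace H A" "A \<noteq> {0}"
  shows "\<exists>U. irreducible_submodule H U \<and> U \<subseteq> A"
proof -
  define Q where "Q d \<longleftrightarrow> (\<exists>U. invariant_subspace H U \<and> U \<subseteq> A \<and> U \<noteq> {0} \<and> dim U = d)" for d
  have "Q (dim A)" unfolding Q_def using A by blast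
  then have "Q (LEAST d. Q d)" by (rule LeastI)
  then obtain U where U: "invariant_subspace H U" "U \<subseteq> A" "U \<noteq> {0}" "dim U = (LEAST d. Q d)"
    unfolding Q_def by blast
  have "U' = {0} \<or> U' = U" if U': "invariant_subspace H U'" "U' \<subseteq> U" for U'
  proof (cases "U' = {0}")
    case False
    then have "Q (dim U')" unfolding Q_def using U' U(2) by blast
    then have "dim U \<le> dim U'" unfolding U(4) by (rule Least_le)
    then have "U' = U"
      using subspace_dim_equal[of U' U] U' U(1) unfolding invariant_subspace_def by blast
    then show ?thesis by blast
  qed simp
  then show ?thesis unfolding irreducible_submodule_def using U by blast
qed

end

fun decomp :: "(real^'n^'n) set \<Rightarrow> (real^'n) set \<Rightarrow> (real^'n) set list \<Rightarrow> bool" where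
  "decomp K A [] \<longleftrightarrow> A = {0}"
| "decomp K A (U # Us) \<longleftrightarrow> irreducible_submodule K U \<and> U \<subseteq> A \<and> (\<exists>P. eqproj K U P \<and> decomp K {a\<in>A. P a = 0} Us)"

lemma split_sum:
  assumes sA: "subspace A" and P: "linear P" "\<forall>v. P v \<in> U" "\<forall>u\<in>U. P u = u" and UA: "U \<subseteq> A"
  shows "A = {x + y |x y. x \<in> U \<and> y \<in> {a\<in>A. P a = 0}}" "U \<inter> {a\<in>A. P a = 0} = {0}"
proof -
  show "A = {x + y |x y. x \<in> U \<and> y \<in> {a\<in>A. P a = 0}}"
  proof
    show "A \<subseteq> {x + y |x y. x \<in> U \<and> y \<in> {a\<in>A. P a = 0}}"
    proof
      fix a assume a: "a \<in> A"
      have "P a \<in> U" using P by blast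
      moreover have "a - P a \<in> A" using a \<open>P a \<in> U\<close> UA sA by (auto simp: subspace_diff)
      moreover have "P (a - P a) = 0" using P \<open>P a \<in> U\<close> by (simp add: linear_diff)
      ultimately show "a \<in> {x + y |x y. x \<in> U \<and> y \<in> {a\<in>A. P a = 0}}"
        by (intro CollectI exI[of _ "P a"] exI[of _ "a - P a"]) auto
    qed
    show "{x + y |x y. x \<in> U \<and> y \<in> {a\<in>A. P a = 0}} \<subseteq> A"
      using UA sA by (auto simp: subspace_add)
  qed
  show "U \<inter> {a\<in>A. P a = 0} = {0}"
  proof
    show "U \<inter> {a\<in>A. P a = 0} \<subseteq> {0}" using P(3) by auto
    have P0: "P 0 = 0" by (rule linear_0[OF P(1)])
    then have "0 \<in> U" using P(2) by metis
    note this P0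
    then show "{0} \<subseteq> U \<inter> {a\<in>A. P a = 0}" using sA by (simp add: subspace_0)
  qed
qed

context fgroup begin

lemma decomp_exists:
  assumes "invariant_subspace H A"
  shows "\<exists>Us. decomp H A Us"
  using assms
proof (induction "dim A" arbitrary: A rule: less_induct)
  case less
  show ?case
  proof (cases "A = {0}")
    case True
    then show ?thesis by (intro exI[of _ "[]"]) simp
  next
    case False
    obtain U where U: "irreducible_submodule H U" "U \<subseteq> A"
      using irred_exists[OF less.prems False] by blast
    have iU: "invariant_subspace H U" using U(1) unfolding irreducible_submodule_def by blast
    obtain P where P: "eqproj H U P" using maschke[OF iU] by blast
    define A' where "A' = {a\<in>A. P a = 0}"
    have iA': "invariant_subspace H A'" unfolding A'_def by (rule inv_kernel[OF less.prems P])
    have "U \<noteq> {0}" using U(1) unfolding irreducible_submodule_def by blast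
    moreover have "0 \<in> U" using iU unfolding invariant_subspace_def by (simp add: subspace_0)
    ultimately obtain u where u: "u \<in> U" "u \<noteq> 0" by blast
    have "P u = u" using P u unfolding eqproj_def by blast
    then have "u \<notin> A'" using u unfolding A'_def by auto
    moreover have "u \<in> A" using u U(2) by blast
    ultimately have ps: "A' \<subset> A" unfolding A'_def by blast
    have sA: "subspace A" "subspace A'" using less.prems iA' unfolding invariant_subspace_def by blast+
    have e1: "span A' = A'" "span A = A" using sA by (simp_all add: span_eq_iff)
    have "dim A' < dim A" using dim_psubset[of A' A] ps unfolding e1 by blast
    then obtain Us where "decomp H A' Us" using less.hyps iA' by blast
    then have "decomp H A (U # Us)" using U P unfolding A'_def by auto
    then show ?thesis by blast
  qed
qed

lemma decomp_props:
  assumes "decomp H A Us" "invariant_subspace H A"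
  shows "(\<forall>U\<in>set Us. irreducible_submodule H U \<and> U \<subseteq> A) \<and> dim A = sum_list (map dim Us)"
  using assms
proof (induction Us arbitrary: A)
  case Nil
  then show ?case by simp
next
  case (Cons U Us)
  from Cons.prems obtain P where U: "irreducible_submodule H U" "U \<subseteq> A" and P: "eqproj H U P"
    and d: "decomp H {a\<in>A. P a = 0} Us" by auto
  have iA': "invariant_subspace H {a\<in>A. P a = 0}" by (rule inv_kernel[OF Cons.prems(2) P])
  note IH = Cons.IH[OF d iA']
  have sA: "subspace A" using Cons.prems(2) unfolding invariant_subspace_def by blast
  have sU: "subspace U" using U(1) unfolding irreducible_submodule_def invariant_subspace_def by blast
  have sA': "subspace {a\<in>A. P a = 0}" using iA' unfolding invariant_subspace_def by blast
  have Pl: "linear P" "\<forall>v. P v \<in> U" "\<forall>u\<in>U. P u = u" using P unfolding eqproj_def by auto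
  note spl = split_sum[OF sA Pl U(2)]
  have "dim A = dim U + dim {a\<in>A. P a = 0}"
    using dim_sums_Int[OF sU sA'] spl by simp
  then show ?case using IH U by auto
qed

end

(* ---- from d3/Rep2.thy ---- *)

lemma mw: "linear (f::real^'n \<Rightarrow> real^'m) \<Longrightarrow> matrix f *v x = f x"
  using matrix_vector_mul(2) by metis

lemma mv_addl: "((A::real^'n^'m) + B) *v x = A *v x + B *v x"
  by (simp add: matrix_vector_mult_add_rdistrib)

lemma mv_scalel: "((c::real) *\<^sub>R (A::real^'n^'m)) *v x = c *\<^sub>R (A *v x)"
  by (simp add: vec_eq_iff matrix_vector_mult_def sum_distrib_left mult.assoc)

lemma mv_diffl: "((A::real^'n^'m) - B) *v x = A *v x - B *v x"
  by (simp add: vec_eq_iff matrix_vector_mult_def sum_subtractf left_diff_distrib)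

lemma orth_proj_unique:
  fixes A :: "'a::euclidean_space set"
  assumes "subspace A" "\<forall>v. p v \<in> A" "\<forall>v. \<forall>w\<in>A. orthogonal (v - p v) w"
    and "y \<in> A" "\<forall>w\<in>A. orthogonal (v - y) w"
  shows "p v = y"
proof -
  have d: "p v - y \<in> A" using assms by (simp add: subspace_diff)
  have "orthogonal (v - y) (p v - y)" "orthogonal (v - p v) (p v - y)"
    using assms d by auto
  then have "orthogonal (p v - y) (p v - y)"
    unfolding orthogonal_def by (simp add: inner_diff_left)
  then have "p v - y = 0" by (simp add: orthogonal_def)
  then show ?thesis by simp
qed

definition Hom :: "(real^'n^'n) set \<Rightarrow> (real^'n) set \<Rightarrow> (real^'n) set \<Rightarrow> (real^'n^'n) set" where
  "Hom K T A = {M. (\<forall>v\<in>T. M *v v \<in> A) \<and> (\<forall>k\<in>K. \<forall>v\<in>T. M *v (k *v v) = k *v (M *v v))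
     \<and> (\<forall>v. (\<forall>t\<in>T. orthogonal t v) \<longrightarrow> M *v v = 0)}"

lemma Hom_subspace:
  assumes "subspace A" shows "subspace (Hom K T A)"
  unfolding subspace_def
proof (intro conjI ballI allI)
  show "0 \<in> Hom K T A" unfolding Hom_def using assms by (simp add: subspace_0)
  fix x y assume "x \<in> Hom K T A" "y \<in> Hom K T A"
  then show "x + y \<in> Hom K T A" unfolding Hom_def using assms
    by (simp add: mv_addl subspace_add matrix_vector_right_distrib)
next
  fix c x assume "x \<in> Hom K T A"
  then show "c *\<^sub>R x \<in> Hom K T A" unfolding Hom_def using assms
    by (simp add: mv_scalel subspace_scale matrix_vector_mult_scaleR)
qed

lemma mat_zero_on:
  fixes M :: "real^'n^'n"
  assumes T: "subspace T" and z: "\<forall>v\<in>T. M *v v = 0" and o: "\<forall>v. (\<forall>t\<in>T. orthogonal t v) \<longrightarrow> M *v v = 0"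
  shows "M = 0"
proof (rule matrix_eqI)
  fix v
  obtain p where p: "linear p" "\<forall>v. p v \<in> T" "\<forall>v. \<forall>w\<in>T. orthogonal (v - p v) w"
    using orth_proj_exists[OF T] by blast
  have "\<forall>t\<in>T. orthogonal t (v - p v)" using p(3) by (simp add: orthogonal_commute)
  then have "M *v (v - p v) = 0" using o by blast
  moreover have "M *v p v = 0" using z p(2) by blast
  ultimately have "M *v v = 0" by (simp add: matrix_vector_mult_diff_distrib)
  then show "M *v v = 0 *v v" by simp
qed

lemma Hom_zero: assumes "subspace T" shows "Hom K T {0} = {0}"
proof
  show "Hom K T {0} \<subseteq> {0}"
    using mat_zero_on[OF assms] unfolding Hom_def by blast
  show "{0} \<subseteq> Hom K T {0}" unfolding Hom_def by simp
qed

lemma Hom_split: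
  assumes T: "subspace T" and sA: "subspace A" and P: "eqproj K U P" and UA: "U \<subseteq> A"
    and sU: "subspace U" and sA': "subspace {a\<in>A. P a = 0}"
  shows "dim (Hom K T A) = dim (Hom K T U) + dim (Hom K T {a\<in>A. P a = 0})"
proof -
  define A' where "A' = {a\<in>A. P a = 0}"
  have Pl: "linear P" "\<forall>v. P v \<in> U" "\<forall>u\<in>U. P u = u" "\<forall>k\<in>K. \<forall>v. P (k *v v) = k *v P v"
    using P unfolding eqproj_def by auto
  have PP: "P (P v) = P v" for v using Pl by blast
  have eq: "Hom K T A = {x + y |x y. x \<in> Hom K T U \<and> y \<in> Hom K T A'}"
  proof
    show "Hom K T A \<subseteq> {x + y |x y. x \<in> Hom K T U \<and> y \<in> Hom K T A'}"
    proof
      fix M assume M: "M \<in> Hom K T A"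
      define M1 where "M1 = matrix P ** M"
      have M1v: "M1 *v v = P (M *v v)" for v
        unfolding M1_def by (simp flip: matrix_vector_mul_assoc add: mw[OF Pl(1)])
      have M2v: "(M - M1) *v v = M *v v - P (M *v v)" for v
        by (simp add: mv_diffl M1v)
      have "M1 \<in> Hom K T U"
        unfolding Hom_def using M Pl linear_0[OF Pl(1)] unfolding Hom_def by (simp add: M1v)
      moreover have "M - M1 \<in> Hom K T A'"
      proof -
        have "M *v v - P (M *v v) \<in> A'" if "v \<in> T" for v
        proof -
          have "M *v v \<in> A" using M that unfolding Hom_def by blast
          moreover have "P (M *v v) \<in> A" using Pl UA by blast
          ultimately have "M *v v - P (M *v v) \<in> A" using sA by (simp add: subspace_diff)
          moreover have "P (M *v v - P (M *v v)) = 0" using PP linear_diff[OF Pl(1)] by simp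
          ultimately show ?thesis unfolding A'_def by blast
        qed
        moreover have "M *v (k *v v) - P (M *v (k *v v)) = k *v (M *v v - P (M *v v))"
          if "k \<in> K" "v \<in> T" for k v
          using M that Pl(4) unfolding Hom_def by (simp add: matrix_vector_mult_diff_distrib)
        moreover have "M *v v - P (M *v v) = 0" if "\<forall>t\<in>T. orthogonal t v" for v
          using M that linear_0[OF Pl(1)] unfolding Hom_def by simp
        ultimately show ?thesis unfolding Hom_def by (simp add: M2v)
      qed
      moreover have "M = M1 + (M - M1)" by simp
      ultimately show "M \<in> {x + y |x y. x \<in> Hom K T U \<and> y \<in> Hom K T A'}" by blast
    qed
    show "{x + y |x y. x \<in> Hom K T U \<and> y \<in> Hom K T A'} \<subseteq> Hom K T A"
    proof
      fix M assume "M \<in> {x + y |x y. x \<in> Hom K T U \<and> y \<in> Hom K T A'}"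
      then obtain X Y where XY: "M = X + Y" "X \<in> Hom K T U" "Y \<in> Hom K T A'" by blast
      have "X *v v + Y *v v \<in> A" if "v \<in> T" for v
        using XY that UA sA unfolding Hom_def A'_def by (auto intro!: subspace_add)
      then show "M \<in> Hom K T A"
        using XY unfolding Hom_def by (simp add: mv_addl matrix_vector_right_distrib)
    qed
  qed
  have int: "Hom K T U \<inter> Hom K T A' = {0}"
  proof
    show "Hom K T U \<inter> Hom K T A' \<subseteq> {0}"
    proof
      fix M assume M: "M \<in> Hom K T U \<inter> Hom K T A'"
      have "\<forall>v\<in>T. M *v v = 0"
      proof
        fix v assume "v \<in> T"
        then have "M *v v \<in> U" "P (M *v v) = 0" using M unfolding Hom_def A'_def by auto
        then show "M *v v = 0" using Pl(3) by auto
      qed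
      then show "M \<in> {0}" using mat_zero_on[OF T] M unfolding Hom_def by blast
    qed
    show "{0} \<subseteq> Hom K T U \<inter> Hom K T A'"
      using Hom_subspace[OF sU] Hom_subspace[OF sA'[folded A'_def]] by (simp add: subspace_0)
  qed
  have s1: "subspace (Hom K T U)" by (rule Hom_subspace[OF sU])
  have s2: "subspace (Hom K T A')" by (rule Hom_subspace[OF sA'[folded A'_def]])
  show ?thesis
    using dim_sums_Int[OF s1 s2] eq int
    unfolding A'_def by simp
qed

context fgroup begin

lemma decomp_hdim:
  assumes "decomp H A Us" "invariant_subspace H A" "subspace T"
  shows "dim (Hom H T A) = sum_list (map (\<lambda>U. dim (Hom H T U)) Us)"
  using assms(1,2)
proof (induction Us arbitrary: A)
  case Nil
  then show ?case using Hom_zero[OF assms(3)] by simp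
next
  case (Cons U Us)
  from Cons.prems obtain P where U: "irreducible_submodule H U" "U \<subseteq> A" and P: "eqproj H U P"
    and d: "decomp H {a\<in>A. P a = 0} Us" by auto
  have iA': "invariant_subspace H {a\<in>A. P a = 0}" by (rule inv_kernel[OF Cons.prems(2) P])
  note IH = Cons.IH[OF d iA']
  have sA: "subspace A" using Cons.prems(2) unfolding invariant_subspace_def by blast
  have sU: "subspace U" using U(1) unfolding irreducible_submodule_def invariant_subspace_def by blast
  have sA': "subspace {a\<in>A. P a = 0}" using iA' unfolding invariant_subspace_def by blast
  show ?case using Hom_split[OF assms(3) sA P U(2) sU sA'] IH by simp
qed

end

(* ---- from d4/Rep3.thy ---- *)

lemma irr_sub: "irreducible_submodule K T \<Longrightarrow> subspace T"
  unfolding irreducible_submodule_def invariant_subspace_def by blast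
lemma irr_inv: "irreducible_submodule K T \<Longrightarrow> invariant_subspace K T"
  unfolding irreducible_submodule_def by blast
lemma inv_mem: "invariant_subspace K T \<Longrightarrow> k \<in> K \<Longrightarrow> v \<in> T \<Longrightarrow> k *v v \<in> T"
  unfolding invariant_subspace_def by blast

lemma subspace_image_lin:
  assumes "linear f" "subspace T" shows "subspace (f ` T)"
proof -
  have "span T = T" using assms(2) by (simp add: span_eq_iff)
  then show ?thesis by (metis span_linear_image[OF assms(1)] subspace_span)
qed

lemma schur_inj:
  assumes T: "irreducible_submodule K T" and lin: "linear \<psi>"
    and tw: "\<forall>k\<in>K. \<forall>v\<in>T. \<psi> (k *v v) = \<sigma> k *v \<psi> v"
    and nz: "\<exists>v\<in>T. \<psi> v \<noteq> 0"
  shows "inj_on \<psi> T"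
proof -
  define Z where "Z = {v\<in>T. \<psi> v = 0}"
  have sT: "subspace T" using irr_sub[OF T] .
  have "subspace Z"
    unfolding subspace_def Z_def
  proof (intro conjI ballI allI)
    show "0 \<in> {v \<in> T. \<psi> v = 0}" using sT linear_0[OF lin] by (simp add: subspace_0)
    fix x y assume "x \<in> {v \<in> T. \<psi> v = 0}" "y \<in> {v \<in> T. \<psi> v = 0}"
    then show "x + y \<in> {v \<in> T. \<psi> v = 0}" using sT linear_add[OF lin, of x y] by (simp add: subspace_add)
  next
    fix c x assume "x \<in> {v \<in> T. \<psi> v = 0}"
    then show "c *\<^sub>R x \<in> {v \<in> T. \<psi> v = 0}" using sT linear_scale[OF lin, of c x] by (simp add: subspace_scale)
  qed
  moreover have "\<forall>k\<in>K. (\<lambda>x. k *v x) ` Z \<subseteq> Z"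
    using tw inv_mem[OF irr_inv[OF T]] unfolding Z_def by auto
  ultimately have "invariant_subspace K Z" unfolding invariant_subspace_def by blast
  moreover have "Z \<subseteq> T" unfolding Z_def by blast
  ultimately have "Z = {0} \<or> Z = T" using T unfolding irreducible_submodule_def by blast
  moreover have "Z \<noteq> T" using nz unfolding Z_def by blast
  ultimately have Z0: "Z = {0}" by blast
  show ?thesis
  proof (rule inj_onI)
    fix x y assume xy: "x \<in> T" "y \<in> T" "\<psi> x = \<psi> y"
    then have "x - y \<in> Z" unfolding Z_def using sT linear_diff[OF lin] by (simp add: subspace_diff)
    then show "x = y" using Z0 by simp
  qed
qed

lemma schur_img:
  assumes T: "invariant_subspace K T" and lin: "linear \<psi>"
    and tw: "\<forall>k\<in>K. \<forall>v\<in>T. \<psi> (k *v v) = \<sigma> k *v \<psi> v"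
    and surj: "\<forall>k'\<in>K. \<exists>k\<in>K. \<sigma> k = k'"
  shows "invariant_subspace K (\<psi> ` T)"
proof -
  have "subspace (\<psi> ` T)" using subspace_image_lin[OF lin] T unfolding invariant_subspace_def by blast
  moreover have "(\<lambda>x. k' *v x) ` (\<psi> ` T) \<subseteq> \<psi> ` T" if k': "k' \<in> K" for k'
  proof
    fix y assume "y \<in> (\<lambda>x. k' *v x) ` (\<psi> ` T)"
    then obtain v where v: "v \<in> T" "y = k' *v \<psi> v" by blast
    obtain k where k: "k \<in> K" "\<sigma> k = k'" using surj k' by blast
    have "y = \<psi> (k *v v)" using tw k v by simp
    then show "y \<in> \<psi> ` T" using inv_mem[OF T k(1) v(1)] by blast
  qed
  ultimately show ?thesis unfolding invariant_subspace_def by blast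
qed

lemma schur_iso:
  assumes T: "irreducible_submodule K T" and U: "irreducible_submodule K U" and lin: "linear \<psi>"
    and tw: "\<forall>k\<in>K. \<forall>v\<in>T. \<psi> (k *v v) = \<sigma> k *v \<psi> v"
    and surj: "\<forall>k'\<in>K. \<exists>k\<in>K. \<sigma> k = k'"
    and sub: "\<psi> ` T \<subseteq> U" and nz: "\<exists>v\<in>T. \<psi> v \<noteq> 0"
  shows "\<psi> ` T = U \<and> inj_on \<psi> T"
proof
  show "inj_on \<psi> T" by (rule schur_inj[OF T lin tw nz])
  have "invariant_subspace K (\<psi> ` T)" by (rule schur_img[OF irr_inv[OF T] lin tw surj])
  then have "\<psi> ` T = {0} \<or> \<psi> ` T = U" using U sub unfolding irreducible_submodule_def by blast
  moreover have "\<psi> ` T \<noteq> {0}" using nz by blast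
  ultimately show "\<psi> ` T = U" by blast
qed

definition iso :: "(real^'n^'n) set \<Rightarrow> (real^'n) set \<Rightarrow> (real^'n) set \<Rightarrow> bool" where
  "iso K T U \<longleftrightarrow> (\<exists>\<psi>. linear \<psi> \<and> \<psi> ` T = U \<and> inj_on \<psi> T \<and> (\<forall>k\<in>K. \<forall>v\<in>T. \<psi> (k *v v) = k *v \<psi> v))"

lemma left_inv_on:
  assumes lin: "linear \<psi>" and sT: "subspace T" and inj: "inj_on \<psi> T"
  shows "\<exists>g. linear g \<and> (\<forall>x\<in>T. g (\<psi> x) = x)"
proof -
  have e: "span T = T" using sT by (simp add: span_eq_iff)
  show ?thesis using linear_inj_on_left_inverse[OF lin, of T] inj unfolding e by auto
qed

lemma iso_refl: "iso K T T"
  unfolding iso_def by (intro exI[of _ "\<lambda>x. x"]) (auto simp: linear_id[unfolded id_def])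

lemma iso_sym:
  assumes T: "invariant_subspace K T" and i: "iso K T U"
  shows "iso K U T"
proof -
  obtain \<psi> where \<psi>: "linear \<psi>" "\<psi> ` T = U" "inj_on \<psi> T" "\<forall>k\<in>K. \<forall>v\<in>T. \<psi> (k *v v) = k *v \<psi> v"
    using i unfolding iso_def by blast
  have sT: "subspace T" using T unfolding invariant_subspace_def by blast
  obtain g where g: "linear g" "\<forall>x\<in>T. g (\<psi> x) = x" using left_inv_on[OF \<psi>(1) sT \<psi>(3)] by blast
  have "g ` U = T" using g(2) \<psi>(2) by force
  moreover have "inj_on g U" using g(2) \<psi>(2) by (smt (verit) image_iff inj_on_def)
  moreover have "\<forall>k\<in>K. \<forall>u\<in>U. g (k *v u) = k *v g u"
  proof (intro ballI)
    fix k u assume k: "k \<in> K" and u: "u \<in> U"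
    then obtain t where t: "t \<in> T" "u = \<psi> t" using \<psi>(2) by blast
    have "g (k *v u) = g (\<psi> (k *v t))" using \<psi>(4) k t by simp
    also have "\<dots> = k *v t" using g(2) inv_mem[OF T k t(1)] by blast
    also have "\<dots> = k *v g u" using g(2) t by simp
    finally show "g (k *v u) = k *v g u" .
  qed
  ultimately show ?thesis unfolding iso_def using g(1) by blast
qed

lemma iso_trans:
  assumes "iso K T U" "iso K U W"
  shows "iso K T W"
proof -
  obtain \<psi> where \<psi>: "linear \<psi>" "\<psi> ` T = U" "inj_on \<psi> T" "\<forall>k\<in>K. \<forall>v\<in>T. \<psi> (k *v v) = k *v \<psi> v"
    using assms(1) unfolding iso_def by blast
  obtain \<phi> where \<phi>: "linear \<phi>" "\<phi> ` U = W" "inj_on \<phi> U" "\<forall>k\<in>K. \<forall>v\<in>U. \<phi> (k *v v) = k *v \<phi> v"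
    using assms(2) unfolding iso_def by blast
  have "linear (\<lambda>x. \<phi> (\<psi> x))" using linear_compose[OF \<psi>(1) \<phi>(1)] by (simp add: o_def)
  moreover have "(\<lambda>x. \<phi> (\<psi> x)) ` T = W" using \<psi>(2) \<phi>(2) by (simp add: image_image[symmetric])
  moreover have "inj_on (\<lambda>x. \<phi> (\<psi> x)) T"
    using \<psi>(2,3) \<phi>(3) comp_inj_on[of \<psi> T \<phi>] by (simp add: o_def)
  moreover have "\<forall>k\<in>K. \<forall>v\<in>T. \<phi> (\<psi> (k *v v)) = k *v \<phi> (\<psi> v)"
    using \<psi>(2,4) \<phi>(4) by auto
  ultimately show ?thesis unfolding iso_def by blast
qed

lemma iso_dim:
  assumes "iso K T U" "subspace T" shows "dim U = dim T"
proof -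
  obtain \<psi> where \<psi>: "linear \<psi>" "\<psi> ` T = U" "inj_on \<psi> T"
    using assms(1) unfolding iso_def by blast
  have e: "span T = T" using assms(2) by (simp add: span_eq_iff)
  show ?thesis using dim_image_eq[OF \<psi>(1), of T] \<psi> unfolding e by simp
qed

lemma end_scalar:
  fixes \<delta> :: "real^'n \<Rightarrow> real^'n"
  assumes odd: "odd CARD('n)" and T: "irreducible_submodule K T" and oT: "odd (dim T)"
    and lin: "linear \<delta>" and into: "\<forall>v\<in>T. \<delta> v \<in> T"
    and eqv: "\<forall>k\<in>K. \<forall>v\<in>T. \<delta> (k *v v) = k *v \<delta> v"
  shows "\<exists>c. \<forall>v\<in>T. \<delta> v = c *\<^sub>R v"
proof -
  obtain v c where v: "v \<in> T" "v \<noteq> 0" "\<delta> v = c *\<^sub>R v"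
    using odd_eigen_sub[OF lin odd irr_sub[OF T] oT into] by blast
  define \<epsilon> where "\<epsilon> x = \<delta> x - c *\<^sub>R x" for x
  have le: "linear \<epsilon>" unfolding \<epsilon>_def using lin unfolding linear_iff by (auto simp: algebra_simps)
  have te: "\<forall>k\<in>K. \<forall>x\<in>T. \<epsilon> (k *v x) = (\<lambda>k. k) k *v \<epsilon> x"
    unfolding \<epsilon>_def using eqv by (simp add: matrix_vector_mult_diff_distrib matrix_vector_mult_scaleR)
  have "\<forall>x\<in>T. \<epsilon> x = 0"
  proof (rule ccontr)
    assume "\<not> (\<forall>x\<in>T. \<epsilon> x = 0)"
    then have "inj_on \<epsilon> T" using schur_inj[OF T le te] by blast
    moreover have "\<epsilon> v = \<epsilon> 0" using v(3) linear_0[OF le] unfolding \<epsilon>_def by simp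
    moreover have "0 \<in> T" using irr_sub[OF T] by (simp add: subspace_0)
    ultimately show False using v(1,2) inj_onD by metis
  qed
  then show ?thesis unfolding \<epsilon>_def by (intro exI[of _ c]) auto
qed


(* ---- from d5/Rep4.thy ---- *)

lemma orth_proj_full:
  fixes T :: "(real^'n) set"
  assumes sT: "subspace T"
  shows "\<exists>p. linear p \<and> (\<forall>v. p v \<in> T) \<and> (\<forall>t\<in>T. p t = t) \<and> (\<forall>v. (\<forall>t\<in>T. orthogonal t v) \<longrightarrow> p v = 0)"
proof -
  obtain p where p: "linear p" "\<forall>v. p v \<in> T" "\<forall>v. \<forall>w\<in>T. orthogonal (v - p v) w"
    using orth_proj_exists[OF sT] by blast
  have "p t = t" if "t \<in> T" for t using orth_proj_id[OF sT p(2,3) that] .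
  moreover have "p v = 0" if "\<forall>t\<in>T. orthogonal t v" for v
    using orth_proj_unique[OF sT p(2,3), of 0 v] that sT by (simp add: subspace_0 orthogonal_commute)
  ultimately show ?thesis using p by blast
qed

lemma hdim_irred:
  fixes T U :: "(real^'n) set"
  assumes odd: "odd CARD('n)" and T: "irreducible_submodule K T" and U: "irreducible_submodule K U"
    and oT: "odd (dim T)"
  shows "dim (Hom K T U) = (if iso K T U then 1 else 0)"
proof (cases "iso K T U")
  case False
  have "Hom K T U \<subseteq> {0}"
  proof
    fix M assume M: "M \<in> Hom K T U"
    show "M \<in> {0}"
    proof (rule ccontr)
      assume "M \<notin> {0}"
      then have "\<exists>v\<in>T. M *v v \<noteq> 0" using mat_zero_on[OF irr_sub[OF T], of M] M unfolding Hom_def by auto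
      moreover have "\<forall>k\<in>K. \<forall>v\<in>T. M *v (k *v v) = (\<lambda>k. k) k *v (M *v v)" using M unfolding Hom_def by simp
      moreover have "(\<lambda>v. M *v v) ` T \<subseteq> U" using M unfolding Hom_def by blast
      ultimately have "(\<lambda>v. M *v v) ` T = U \<and> inj_on (\<lambda>v. M *v v) T"
        using schur_iso[OF T U matrix_vector_mul_linear, where \<sigma>="\<lambda>k. k"] by blast
      then have "iso K T U" unfolding iso_def using M unfolding Hom_def
        by (intro exI[of _ "\<lambda>v. M *v v"]) auto
      then show False using False by blast
    qed
  qed
  then have "Hom K T U = {0}" using Hom_subspace[OF irr_sub[OF U]] by (auto simp: subspace_0)
  then show ?thesis using False by simp
next
  case True
  obtain \<psi> where \<psi>: "linear \<psi>" "\<psi> ` T = U" "inj_on \<psi> T" "\<forall>k\<in>K. \<forall>v\<in>T. \<psi> (k *v v) = k *v \<psi> v"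
    using True unfolding iso_def by blast
  have sT: "subspace T" using irr_sub[OF T] .
  obtain p where p: "linear p" "\<forall>v. p v \<in> T" "\<forall>t\<in>T. p t = t" "\<forall>v. (\<forall>t\<in>T. orthogonal t v) \<longrightarrow> p v = 0"
    using orth_proj_full[OF sT] by blast
  define M0 where "M0 = matrix (\<lambda>v. \<psi> (p v))"
  have linc: "linear (\<lambda>v. \<psi> (p v))" using linear_compose[OF p(1) \<psi>(1)] by (simp add: o_def)
  have M0v: "M0 *v v = \<psi> (p v)" for v unfolding M0_def by (rule mw[OF linc])
  have M0H: "M0 \<in> Hom K T U"
    unfolding Hom_def using \<psi> p inv_mem[OF irr_inv[OF T]] linear_0[OF \<psi>(1)] by (auto simp: M0v)
  obtain g where g: "linear g" "\<forall>x\<in>T. g (\<psi> x) = x" using left_inv_on[OF \<psi>(1) sT \<psi>(3)] by blast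
  have "M \<in> span {M0}" if M: "M \<in> Hom K T U" for M
  proof -
    define \<delta> where "\<delta> v = g (M *v v)" for v
    have ld: "linear \<delta>" unfolding \<delta>_def using linear_compose[OF matrix_vector_mul_linear g(1)] by (simp add: o_def)
    have MT: "M *v v \<in> \<psi> ` T" if "v \<in> T" for v using M that \<psi>(2) unfolding Hom_def by blast
    have into: "\<forall>v\<in>T. \<delta> v \<in> T"
    proof
      fix v assume "v \<in> T"
      then obtain t where "t \<in> T" "M *v v = \<psi> t" using MT by blast
      then show "\<delta> v \<in> T" unfolding \<delta>_def using g(2) by simp
    qed
    have eqv: "\<forall>k\<in>K. \<forall>v\<in>T. \<delta> (k *v v) = k *v \<delta> v"
    proof (intro ballI)
      fix k v assume k: "k \<in> K" and v: "v \<in> T"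
      then obtain t where t: "t \<in> T" "M *v v = \<psi> t" using MT by blast
      have "\<delta> (k *v v) = g (k *v \<psi> t)" unfolding \<delta>_def using M k v t unfolding Hom_def by simp
      also have "\<dots> = g (\<psi> (k *v t))" using \<psi>(4) k t by simp
      also have "\<dots> = k *v t" using g(2) inv_mem[OF irr_inv[OF T] k t(1)] by blast
      also have "\<dots> = k *v \<delta> v" unfolding \<delta>_def using t g(2) by simp
      finally show "\<delta> (k *v v) = k *v \<delta> v" .
    qed
    obtain c where c: "\<forall>v\<in>T. \<delta> v = c *\<^sub>R v" using end_scalar[OF odd T oT ld into eqv] by blast
    have "M - c *\<^sub>R M0 = 0"
    proof (rule mat_zero_on[OF sT])
      show "\<forall>v\<in>T. (M - c *\<^sub>R M0) *v v = 0"
      proof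
        fix v assume v: "v \<in> T"
        then obtain t where t: "t \<in> T" "M *v v = \<psi> t" using MT by blast
        have e1: "g (M *v v) = c *\<^sub>R v" using c v unfolding \<delta>_def by blast
        have e2: "g (M *v v) = t" using t g(2) by simp
        have "t = c *\<^sub>R v" using e1 e2 by simp
        then have "M *v v = c *\<^sub>R \<psi> v" using t linear_scale[OF \<psi>(1)] by simp
        then show "(M - c *\<^sub>R M0) *v v = 0" using v p(3) by (simp add: mv_diffl mv_scalel M0v)
      qed
      show "\<forall>v. (\<forall>t\<in>T. orthogonal t v) \<longrightarrow> (M - c *\<^sub>R M0) *v v = 0"
        using M M0H unfolding Hom_def by (simp add: mv_diffl mv_scalel)
    qed
    then have "M = c *\<^sub>R M0" by simp
    then show ?thesis by (simp add: span_base span_scale)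
  qed
  then have "Hom K T U \<subseteq> span {M0}" by blast
  moreover have "span {M0} \<subseteq> Hom K T U"
    using span_minimal[of "{M0}" "Hom K T U"] M0H Hom_subspace[OF irr_sub[OF U]] by blast
  ultimately have HS: "Hom K T U = span {M0}" by blast
  have "M0 \<noteq> 0"
  proof
    assume M00: "M0 = 0"
    have "T \<noteq> {0}" using T unfolding irreducible_submodule_def by blast
    moreover have "0 \<in> T" using sT by (simp add: subspace_0)
    ultimately obtain t where t: "t \<in> T" "t \<noteq> 0" by blast
    have "\<psi> t = \<psi> 0" using M0v[of t] M00 p(3) t linear_0[OF \<psi>(1)] by simp
    then show False using \<psi>(3) t \<open>0 \<in> T\<close> inj_onD by metis
  qed
  then show ?thesis using HS True by simp
qed

lemma hom_transfer:
  fixes T T' A A' :: "(real^'n) set" and K :: "(real^'n^'n) set"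
  assumes iT: "invariant_subspace K T" and sT': "subspace T'" and sA: "subspace A" and sA': "subspace A'"
    and \<psi>: "linear \<psi>" "inj_on \<psi> T" "\<psi> ` T = T'"
    and \<gamma>: "linear \<gamma>" "inj \<gamma>" "\<forall>a\<in>A. \<gamma> a \<in> A'"
    and surj: "\<forall>k'\<in>K. \<exists>k\<in>K. \<sigma> k = k'"
    and tw\<psi>: "\<forall>k\<in>K. \<forall>t\<in>T. \<psi> (k *v t) = \<sigma> k *v \<psi> t"
    and tw\<gamma>: "\<forall>k\<in>K. \<forall>a\<in>A. \<gamma> (k *v a) = \<sigma> k *v \<gamma> a"
  shows "dim (Hom K T A) \<le> dim (Hom K T' A')"
proof -
  have sT: "subspace T" using iT unfolding invariant_subspace_def by blast
  obtain g where g: "linear g" "\<forall>x\<in>T. g (\<psi> x) = x" using left_inv_on[OF \<psi>(1) sT \<psi>(2)] by blast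
  obtain p where p: "linear p" "\<forall>v. p v \<in> T'" "\<forall>t\<in>T'. p t = t" "\<forall>v. (\<forall>t\<in>T'. orthogonal t v) \<longrightarrow> p v = 0"
    using orth_proj_full[OF sT'] by blast
  define W where "W = matrix (\<lambda>v. g (p v))"
  define Gm where "Gm = matrix \<gamma>"
  define \<Phi> where "\<Phi> M = Gm ** M ** W" for M
  have linc: "linear (\<lambda>v. g (p v))" using linear_compose[OF p(1) g(1)] by (simp add: o_def)
  have \<Phi>v: "\<Phi> M *v v = \<gamma> (M *v g (p v))" for M v
    unfolding \<Phi>_def W_def Gm_def by (simp flip: matrix_vector_mul_assoc add: mw[OF linc] mw[OF \<gamma>(1)])
  have lin\<Phi>: "linear \<Phi>"
  proof (rule linearI)
    fix x y show "\<Phi> (x + y) = \<Phi> x + \<Phi> y"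
      by (rule matrix_eqI) (simp add: \<Phi>v mv_addl linear_add[OF \<gamma>(1)])
  next
    fix c x show "\<Phi> (c *\<^sub>R x) = c *\<^sub>R \<Phi> x"
      by (rule matrix_eqI) (simp add: \<Phi>v mv_scalel linear_scale[OF \<gamma>(1)])
  qed
  have g\<psi>: "g (p (\<psi> t)) = t" if "t \<in> T" for t using g(2) p(3) \<psi>(3) that by auto
  have into: "\<Phi> M \<in> Hom K T' A'" if M: "M \<in> Hom K T A" for M
  proof -
    have "\<forall>v\<in>T'. \<Phi> M *v v \<in> A'"
    proof
      fix v assume "v \<in> T'"
      then obtain t where t: "t \<in> T" "v = \<psi> t" using \<psi>(3) by blast
      then show "\<Phi> M *v v \<in> A'" using \<Phi>v g\<psi> M \<gamma>(3) unfolding Hom_def by auto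
    qed
    moreover have "\<forall>k'\<in>K. \<forall>v\<in>T'. \<Phi> M *v (k' *v v) = k' *v (\<Phi> M *v v)"
    proof (intro ballI)
      fix k' v assume k': "k' \<in> K" and v: "v \<in> T'"
      obtain k where k: "k \<in> K" "\<sigma> k = k'" using surj k' by blast
      obtain t where t: "t \<in> T" "v = \<psi> t" using \<psi>(3) v by blast
      have kt: "k *v t \<in> T" using inv_mem[OF iT k(1) t(1)] .
      have "k' *v v = \<psi> (k *v t)" using tw\<psi> k t by simp
      then have "\<Phi> M *v (k' *v v) = \<gamma> (M *v (k *v t))" using \<Phi>v g\<psi>[OF kt] by simp
      also have "\<dots> = \<gamma> (k *v (M *v t))" using M k t unfolding Hom_def by simp
      also have "\<dots> = k' *v \<gamma> (M *v t)" using tw\<gamma> k t M unfolding Hom_def by simp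
      also have "\<dots> = k' *v (\<Phi> M *v v)" using \<Phi>v g\<psi>[OF t(1)] t by simp
      finally show "\<Phi> M *v (k' *v v) = k' *v (\<Phi> M *v v)" .
    qed
    moreover have "\<forall>v. (\<forall>t\<in>T'. orthogonal t v) \<longrightarrow> \<Phi> M *v v = 0"
      using p(4) \<Phi>v linear_0[OF g(1)] linear_0[OF \<gamma>(1)] by simp
    ultimately show ?thesis unfolding Hom_def by blast
  qed
  have ker: "M = 0" if M: "M \<in> Hom K T A" "\<Phi> M = 0" for M
  proof (rule mat_zero_on[OF sT])
    show "\<forall>v\<in>T. M *v v = 0"
    proof
      fix t assume t: "t \<in> T"
      have "\<gamma> (M *v t) = \<Phi> M *v \<psi> t" using \<Phi>v g\<psi>[OF t] by simp
      also have "\<dots> = 0" using M(2) by simp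
      finally have "\<gamma> (M *v t) = \<gamma> 0" using linear_0[OF \<gamma>(1)] by simp
      then show "M *v t = 0" using \<gamma>(2) by (simp add: inj_eq)
    qed
    show "\<forall>v. (\<forall>t\<in>T. orthogonal t v) \<longrightarrow> M *v v = 0" using M unfolding Hom_def by blast
  qed
  have sH: "subspace (Hom K T A)" by (rule Hom_subspace[OF sA])
  have injH: "inj_on \<Phi> (span (Hom K T A))"
  proof -
    have e: "span (Hom K T A) = Hom K T A" using sH by (simp add: span_eq_iff)
    show ?thesis unfolding e
    proof (rule inj_onI)
      fix x y assume xy: "x \<in> Hom K T A" "y \<in> Hom K T A" "\<Phi> x = \<Phi> y"
      have "x - y \<in> Hom K T A" using sH xy by (simp add: subspace_diff)
      moreover have "\<Phi> (x - y) = 0" using xy linear_diff[OF lin\<Phi>] by simp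
      ultimately have "x - y = 0" using ker by blast
      then show "x = y" by simp
    qed
  qed
  have "dim (\<Phi> ` Hom K T A) = dim (Hom K T A)" by (rule dim_image_eq[OF lin\<Phi> injH])
  moreover have "\<Phi> ` Hom K T A \<subseteq> Hom K T' A'" using into by blast
  ultimately show ?thesis using dim_subset by metis
qed


(* ---- from d6/Main1.thy ---- *)

definition nrm :: "(real^'n^'n) set \<Rightarrow> real^'n^'n \<Rightarrow> bool" where
  "nrm H X \<longleftrightarrow> invertible X \<and> (\<lambda>y. X ** y ** matrix_inv X) ` H = H"

lemma mv_inv: fixes X :: "real^'n^'n" assumes "invertible X"
  shows "matrix_inv X *v (X *v v) = v" "X *v (matrix_inv X *v v) = v"
  using minv[OF assms] by (simp_all add: matrix_vector_mul_assoc)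

lemma minv_minv: fixes X :: "real^'n^'n" assumes "invertible X" shows "matrix_inv (matrix_inv X) = X" "invertible (matrix_inv X)"
proof -
  show "matrix_inv (matrix_inv X) = X" using minv(2)[OF assms] by (rule minv_unique)
  show "invertible (matrix_inv X)" unfolding invertible_def using minv[OF assms] by blast
qed

lemma nrm_inv: assumes "nrm H X" shows "nrm H (matrix_inv X)"
proof -
  have X: "invertible X" using assms unfolding nrm_def by blast
  note mi = minv[OF X]
  have cX: "(\<lambda>y. X ** y ** matrix_inv X) ` H = H" using assms unfolding nrm_def by blast
  have "(\<lambda>y. matrix_inv X ** y ** X) ` H = H"
  proof
    show "(\<lambda>y. matrix_inv X ** y ** X) ` H \<subseteq> H"
    proof
      fix z assume "z \<in> (\<lambda>y. matrix_inv X ** y ** X) ` H"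
      then obtain y where y: "y \<in> H" "z = matrix_inv X ** y ** X" by blast
      then obtain y0 where y0: "y0 \<in> H" "y = X ** y0 ** matrix_inv X" using cX by blast
      have "z = y0" unfolding y y0 by (rule matrix_eqI) (simp flip: matrix_vector_mul_assoc add: mv_inv[OF X])
      then show "z \<in> H" using y0 by simp
    qed
    show "H \<subseteq> (\<lambda>y. matrix_inv X ** y ** X) ` H"
    proof
      fix z assume z: "z \<in> H"
      have "X ** z ** matrix_inv X \<in> H" using z cX by blast
      moreover have "z = matrix_inv X ** (X ** z ** matrix_inv X) ** X"
        by (rule matrix_eqI) (simp flip: matrix_vector_mul_assoc add: mv_inv[OF X])
      ultimately show "z \<in> (\<lambda>y. matrix_inv X ** y ** X) ` H" by blast
    qed
  qed
  then show ?thesis unfolding nrm_def using minv_minv[OF X] by simp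
qed

lemma nrm_conj_in: assumes "nrm H X" "h \<in> H" shows "X ** h ** matrix_inv X \<in> H"
  using assms unfolding nrm_def by blast

lemma nrm_conj_in': assumes "nrm H X" "h \<in> H" shows "matrix_inv X ** h ** X \<in> H"
proof -
  have "invertible X" using assms(1) unfolding nrm_def by blast
  then show ?thesis using nrm_conj_in[OF nrm_inv[OF assms(1)] assms(2)] minv_minv(1) by metis
qed

lemma nrm_twist: assumes "nrm H X" "h \<in> H"
  shows "X *v (h *v v) = (X ** h ** matrix_inv X) *v (X *v v)"
proof -
  have X: "invertible X" using assms unfolding nrm_def by blast
  show ?thesis by (simp flip: matrix_vector_mul_assoc add: mv_inv[OF X])
qed

lemma nrm_surj: assumes "nrm H X" shows "\<forall>k'\<in>H. \<exists>k\<in>H. X ** k ** matrix_inv X = k'"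
proof
  fix k' assume "k' \<in> H"
  then have "k' \<in> (\<lambda>y. X ** y ** matrix_inv X) ` H" using assms unfolding nrm_def by simp
  then show "\<exists>k\<in>H. X ** k ** matrix_inv X = k'" by (auto simp: image_iff)
qed

lemma img_irr:
  assumes S: "irreducible_submodule H S" and X: "nrm H X"
  shows "irreducible_submodule H ((\<lambda>v. X *v v) ` S)"
proof -
  have Xi: "invertible X" using X unfolding nrm_def by blast
  have sS: "subspace S" using irr_sub[OF S] .
  let ?XS = "(\<lambda>v. X *v v) ` S"
  have tw: "\<forall>k\<in>H. \<forall>t\<in>S. X *v (k *v t) = (X ** k ** matrix_inv X) *v (X *v t)"
    using nrm_twist[OF X] by blast
  have iXS: "invariant_subspace H ?XS"
    by (rule schur_img[OF irr_inv[OF S] matrix_vector_mul_linear tw nrm_surj[OF X]])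
  have "?XS \<noteq> {0}"
  proof
    assume "?XS = {0}"
    then have "\<forall>s\<in>S. X *v s = 0" by blast
    then have "\<forall>s\<in>S. s = 0" using mv_inv(1)[OF Xi] by (metis matrix_vector_mult_0_right)
    moreover have "0 \<in> S" using sS by (simp add: subspace_0)
    ultimately have "S = {0}" by blast
    then show False using S unfolding irreducible_submodule_def by blast
  qed
  moreover have "U = {0} \<or> U = ?XS" if U: "invariant_subspace H U" "U \<subseteq> ?XS" for U
  proof -
    let ?Y = "matrix_inv X"
    have XY: "nrm H ?Y" by (rule nrm_inv[OF X])
    have twY: "\<forall>k\<in>H. \<forall>t\<in>U. ?Y *v (k *v t) = (?Y ** k ** matrix_inv ?Y) *v (?Y *v t)"
      using nrm_twist[OF XY] by blast
    have iYU: "invariant_subspace H ((\<lambda>v. ?Y *v v) ` U)"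
      by (rule schur_img[OF U(1) matrix_vector_mul_linear twY nrm_surj[OF XY]])
    have "(\<lambda>v. ?Y *v v) ` U \<subseteq> S" using U(2) mv_inv(1)[OF Xi] by auto
    then have "(\<lambda>v. ?Y *v v) ` U = {0} \<or> (\<lambda>v. ?Y *v v) ` U = S"
      using S iYU unfolding irreducible_submodule_def by blast
    moreover have "(\<lambda>v. X *v v) ` ((\<lambda>v. ?Y *v v) ` U) = U"
      using mv_inv(2)[OF Xi] by (force simp: image_image)
    ultimately show ?thesis by auto
  qed
  ultimately show ?thesis unfolding irreducible_submodule_def using iXS by blast
qed

lemma char_nrm:
  assumes Hc: "characteristic_subgroup H G" and X: "invertible X"
    and into: "\<forall>k\<in>G. X ** k ** matrix_inv X \<in> G" and onto: "\<forall>k'\<in>G. \<exists>k\<in>G. X ** k ** matrix_inv X = k'"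
  shows "nrm H X"
proof -
  note mi = minv[OF X]
  define \<phi> where "\<phi> y = X ** y ** matrix_inv X" for y
  have "inj_on \<phi> G"
  proof (rule inj_onI)
    fix x y assume "\<phi> x = \<phi> y"
    then have "matrix_inv X ** \<phi> x ** X = matrix_inv X ** \<phi> y ** X" by simp
    moreover have "matrix_inv X ** \<phi> z ** X = z" for z
      unfolding \<phi>_def by (rule matrix_eqI) (simp flip: matrix_vector_mul_assoc add: mv_inv[OF X])
    ultimately show "x = y" by metis
  qed
  moreover have "\<phi> ` G = G"
  proof
    show "\<phi> ` G \<subseteq> G" using into unfolding \<phi>_def by blast
    show "G \<subseteq> \<phi> ` G"
    proof
      fix k' assume "k' \<in> G"
      then obtain k where "k \<in> G" "X ** k ** matrix_inv X = k'" using onto by blast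
      then show "k' \<in> \<phi> ` G" unfolding \<phi>_def by blast
    qed
  qed
  ultimately have "bij_betw \<phi> G G" unfolding bij_betw_def by blast
  moreover have "\<forall>x\<in>G. \<forall>y\<in>G. \<phi> (x ** y) = \<phi> x ** \<phi> y"
  proof (intro ballI)
    fix x y
    show "\<phi> (x ** y) = \<phi> x ** \<phi> y"
      unfolding \<phi>_def by (rule matrix_eqI) (simp flip: matrix_vector_mul_assoc add: mv_inv[OF X])
  qed
  ultimately have "\<phi> ` H = H" using Hc unfolding characteristic_subgroup_def by blast
  then show ?thesis unfolding nrm_def \<phi>_def using X by blast
qed


(* ---- from d7/Main2.thy ---- *)

lemma mv_inj: fixes X :: "real^'n^'n" assumes "invertible X" shows "inj (\<lambda>v. X *v v)"
proof (rule injI)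
  fix x y assume "X *v x = X *v y"
  then have "matrix_inv X *v (X *v x) = matrix_inv X *v (X *v y)" by simp
  then show "x = y" using mv_inv(1)[OF assms] by simp
qed

locale setting =
  fixes G H :: "(real^'n^'n) set" and S :: "(real^'n) set"
  assumes odd: "odd CARD('n)" and Gg: "matrix_group G" and Gf: "finite G"
    and Girr: "irreducible_submodule G UNIV" and Hc: "characteristic_subgroup H G"
    and Sirr: "irreducible_submodule H S"
begin

lemma HG: "H \<subseteq> G" "matrix_group H"
  using Hc unfolding characteristic_subgroup_def matrix_subgroup_def by auto

sublocale Gr: fgroup G using Gg Gf by unfold_locales
sublocale Hr: fgroup H using HG Gf finite_subset by unfold_locales blast+

lemma nrm_G: assumes g: "g \<in> G" shows "nrm H g"
proof (rule char_nrm[OF Hc Gr.invertible_in[OF g]])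
  show "\<forall>k\<in>G. g ** k ** matrix_inv g \<in> G" using g Gr.mul_in Gr.inv_in by blast
  show "\<forall>k'\<in>G. \<exists>k\<in>G. g ** k ** matrix_inv g = k'"
  proof
    fix k' assume k': "k' \<in> G"
    have "matrix_inv g ** k' ** g \<in> G" using g k' Gr.mul_in Gr.inv_in by blast
    moreover have "g ** (matrix_inv g ** k' ** g) ** matrix_inv g = k'"
      by (rule matrix_eqI) (simp flip: matrix_vector_mul_assoc add: mv_inv[OF Gr.invertible_in[OF g]])
    ultimately show "\<exists>k\<in>G. g ** k ** matrix_inv g = k'" by blast
  qed
qed

lemma sS: "subspace S" using irr_sub[OF Sirr] .

lemma span_tr: "span (\<Union>g\<in>G. (\<lambda>v. g *v v) ` S) = UNIV"
proof -
  define X where "X = (\<Union>g\<in>G. (\<lambda>v. g *v v) ` S)"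
  have "invariant_subspace G (span X)"
    unfolding invariant_subspace_def
  proof (intro conjI ballI)
    show "subspace (span X)" by (rule subspace_span)
    fix g' assume g': "g' \<in> G"
    have "(\<lambda>v. g' *v v) ` X \<subseteq> X"
    proof
      fix y assume "y \<in> (\<lambda>v. g' *v v) ` X"
      then obtain g s where "g \<in> G" "s \<in> S" "y = g' *v (g *v s)" unfolding X_def by blast
      then show "y \<in> X" unfolding X_def using Gr.mul_in[OF g'] by (auto simp: matrix_vector_mul_assoc)
    qed
    then have "span ((\<lambda>v. g' *v v) ` X) \<subseteq> span X" by (rule span_mono)
    then show "(\<lambda>v. g' *v v) ` span X \<subseteq> span X"
      using span_linear_image[OF matrix_vector_mul_linear, of g' X] by simp
  qed
  moreover have "S \<subseteq> span X"
  proof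
    fix s assume "s \<in> S"
    then have "mat 1 *v s \<in> X" unfolding X_def using Gr.one_in by blast
    then show "s \<in> span X" using span_base by fastforce
  qed
  moreover have "S \<noteq> {0}" using Sirr unfolding irreducible_submodule_def by blast
  moreover have "0 \<in> S" using sS by (simp add: subspace_0)
  ultimately have "span X \<noteq> {0}" "invariant_subspace G (span X)" by auto
  then show ?thesis using Girr unfolding irreducible_submodule_def X_def by blast
qed

lemma proj_hits:
  assumes P: "eqproj H U P" and U: "U \<noteq> {0}" "subspace U"
  shows "\<exists>g\<in>G. \<exists>s\<in>S. P (g *v s) \<noteq> 0"
proof (rule ccontr)
  assume "\<not> ?thesis"
  then have z: "\<And>x. x \<in> (\<Union>g\<in>G. (\<lambda>v. g *v v) ` S) \<Longrightarrow> P x = 0" by blast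
  have lin: "linear P" using P unfolding eqproj_def by blast
  have "P x = 0" for x
  proof -
    have "x \<in> span (\<Union>g\<in>G. (\<lambda>v. g *v v) ` S)" unfolding span_tr by simp
    then show ?thesis using real_vector.linear_eq_0_on_span[OF lin, of "\<Union>g\<in>G. (\<lambda>v. g *v v) ` S" x] z by blast
  qed
  moreover have "0 \<in> U" using U(2) by (simp add: subspace_0)
  then obtain u where "u \<in> U" "u \<noteq> 0" using U(1) by blast
  moreover have "P u = u" using P \<open>u \<in> U\<close> unfolding eqproj_def by blast
  ultimately show False by simp
qed

lemma tr_irr: "g \<in> G \<Longrightarrow> irreducible_submodule H ((\<lambda>v. g *v v) ` S)"
  using img_irr[OF Sirr nrm_G] by blast

lemma irr_is_translate:
  assumes U: "irreducible_submodule H U"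
  shows "\<exists>g\<in>G. iso H ((\<lambda>v. g *v v) ` S) U"
proof -
  obtain P where P: "eqproj H U P" using Hr.maschke[OF irr_inv[OF U]] by blast
  have "U \<noteq> {0}" using U unfolding irreducible_submodule_def by blast
  then obtain g s where g: "g \<in> G" "s \<in> S" "P (g *v s) \<noteq> 0" using proj_hits[OF P _ irr_sub[OF U]] by blast
  let ?T = "(\<lambda>v. g *v v) ` S"
  have lin: "linear P" and tw: "\<forall>k\<in>H. \<forall>v\<in>?T. P (k *v v) = (\<lambda>k. k) k *v P v"
    using P unfolding eqproj_def by auto
  have "P ` ?T \<subseteq> U" using P unfolding eqproj_def by blast
  moreover have "\<exists>v\<in>?T. P v \<noteq> 0" using g by blast
  ultimately have "P ` ?T = U \<and> inj_on P ?T"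
    using schur_iso[OF tr_irr[OF g(1)] U lin tw] by blast
  moreover have "\<forall>k\<in>H. \<forall>v\<in>?T. P (k *v v) = k *v P v" using tw by simp
  ultimately have "iso H ?T U" unfolding iso_def using lin by blast
  then show ?thesis using g(1) by blast
qed

lemma dim_tr: assumes g: "g \<in> G" shows "dim ((\<lambda>v. g *v v) ` S) = dim S"
proof -
  have "inj_on (\<lambda>v. g *v v) (span S)" using inj_on_subset[OF mv_inj[OF Gr.invertible_in[OF g]]] by blast
  then show ?thesis by (rule dim_image_eq[OF matrix_vector_mul_linear])
qed

lemma hdim_iso_eq:
  assumes i: "iso H T T'" and iT: "invariant_subspace H T" and iT': "invariant_subspace H T'"
  shows "dim (Hom H T UNIV) = dim (Hom H T' UNIV)"
proof -
  have gen: "dim (Hom H T1 UNIV) \<le> dim (Hom H T2 UNIV)"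
    if i: "iso H T1 T2" and iT1: "invariant_subspace H T1" and iT2: "invariant_subspace H T2" for T1 T2
  proof -
    obtain \<psi> where \<psi>: "linear \<psi>" "\<psi> ` T1 = T2" "inj_on \<psi> T1" "\<forall>k\<in>H. \<forall>v\<in>T1. \<psi> (k *v v) = k *v \<psi> v"
      using i unfolding iso_def by blast
    have s2: "subspace T2" using iT2 unfolding invariant_subspace_def by blast
    have l: "linear (\<lambda>x::real^'n. x)" by (simp add: linear_id[unfolded id_def])
    have inj: "inj (\<lambda>x::real^'n. x)" by (simp add: inj_on_def)
    have u: "\<forall>a\<in>UNIV. (\<lambda>x::real^'n. x) a \<in> UNIV" by simp
    have su: "\<forall>k'\<in>H. \<exists>k\<in>H. (\<lambda>k. k) k = k'" by simp
    have t1: "\<forall>k\<in>H. \<forall>t\<in>T1. \<psi> (k *v t) = (\<lambda>k. k) k *v \<psi> t" using \<psi>(4) by simp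
    have t2: "\<forall>k\<in>H. \<forall>a\<in>UNIV. (\<lambda>x. x) (k *v a) = (\<lambda>k. k) k *v (\<lambda>x. x) a" by simp
    show ?thesis
      by (rule hom_transfer[OF iT1 s2 subspace_UNIV subspace_UNIV \<psi>(1) \<psi>(3) \<psi>(2) l inj u su t1 t2])
  qed
  show ?thesis using gen[OF i iT iT'] gen[OF iso_sym[OF iT i] iT' iT] by simp
qed

lemma hdim_tr_eq:
  assumes g: "g \<in> G"
  shows "dim (Hom H ((\<lambda>v. g *v v) ` S) UNIV) = dim (Hom H S UNIV)"
proof -
  have gi: "invertible g" using Gr.invertible_in[OF g] .
  have n: "nrm H g" using nrm_G[OF g] .
  have ni: "nrm H (matrix_inv g)" using nrm_inv[OF n] .
  have gii: "invertible (matrix_inv g)" using minv_minv(2)[OF gi] .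
  let ?T = "(\<lambda>v. g *v v) ` S"
  have iT: "invariant_subspace H ?T" using irr_inv[OF tr_irr[OF g]] .
  have sT: "subspace ?T" using iT unfolding invariant_subspace_def by blast
  have ig: "inj_on (\<lambda>v. g *v v) S" "inj (\<lambda>v. g *v v)" using mv_inj[OF gi] inj_on_subset[OF mv_inj[OF gi]] by blast+
  have igi: "inj_on (\<lambda>v. matrix_inv g *v v) ?T" "inj (\<lambda>v. matrix_inv g *v v)" using mv_inj[OF gii] inj_on_subset[OF mv_inj[OF gii]] by blast+
  have bk: "(\<lambda>v. matrix_inv g *v v) ` ?T = S" using mv_inv(1)[OF gi] by (force simp: image_image)
  have tw1: "\<forall>k\<in>H. \<forall>t\<in>X. g *v (k *v t) = (g ** k ** matrix_inv g) *v (g *v t)" for X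
    using nrm_twist[OF n] by blast
  have tw2: "\<forall>k\<in>H. \<forall>t\<in>X. matrix_inv g *v (k *v t) = (matrix_inv g ** k ** matrix_inv (matrix_inv g)) *v (matrix_inv g *v t)" for X
    using nrm_twist[OF ni] by blast
  have u: "\<forall>a\<in>UNIV. (X::real^'n^'n) *v a \<in> UNIV" for X by simp
  have le1: "dim (Hom H S UNIV) \<le> dim (Hom H ?T UNIV)"
    by (rule hom_transfer[OF irr_inv[OF Sirr] sT subspace_UNIV subspace_UNIV matrix_vector_mul_linear ig(1) refl
          matrix_vector_mul_linear ig(2) u nrm_surj[OF n] tw1 tw1])
  have le2: "dim (Hom H ?T UNIV) \<le> dim (Hom H S UNIV)"
    by (rule hom_transfer[OF iT sS subspace_UNIV subspace_UNIV matrix_vector_mul_linear igi(1) bk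
          matrix_vector_mul_linear igi(2) u nrm_surj[OF ni] tw2 tw2])
  show ?thesis using le1 le2 by simp
qed

end

(* ---- from d8/Main3.thy ---- *)

lemma sum_list_nth: "sum_list (map f xs) = (\<Sum>j<length xs. f (xs ! j))"
  by (simp add: sum_list_sum_nth atLeast0LessThan)

lemma card_filter_sum: "card {k\<in>{..<(N::nat)}. P k} = (\<Sum>k<N. if P k then 1 else 0)"
  by (simp add: sum.If_cases Int_def)

context setting begin

lemma counting: "odd (dim S) \<and> odd (dim (Hom H S UNIV))"
proof -
  have iV: "invariant_subspace H UNIV" unfolding invariant_subspace_def by simp
  obtain Us where d: "decomp H UNIV Us" using Hr.decomp_exists[OF iV] by blast
  have props: "\<forall>U\<in>set Us. irreducible_submodule H U" and dV: "dim (UNIV::(real^'n) set) = sum_list (map dim Us)"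
    using Hr.decomp_props[OF d iV] by auto
  define N where "N = length Us"
  have Uj: "irreducible_submodule H (Us ! j)" if "j < N" for j using props that unfolding N_def by auto
  have tr: "\<exists>g\<in>G. iso H ((\<lambda>v. g *v v) ` S) (Us ! j)" if "j < N" for j
    using irr_is_translate[OF Uj[OF that]] .
  have dU: "dim (Us ! j) = dim S" if j: "j < N" for j
  proof -
    obtain g where g: "g \<in> G" "iso H ((\<lambda>v. g *v v) ` S) (Us ! j)" using tr[OF j] by blast
    have "dim (Us ! j) = dim ((\<lambda>v. g *v v) ` S)" using iso_dim[OF g(2) irr_sub[OF tr_irr[OF g(1)]]] .
    then show ?thesis using dim_tr[OF g(1)] by simp
  qed
  have "CARD('n) = (\<Sum>j<N. dim (Us ! j))" using dV unfolding sum_list_nth N_def by simp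
  also have "\<dots> = N * dim S" using dU by simp
  finally have cN: "CARD('n) = N * dim S" .
  then have oS: "odd (dim S)" and oN: "odd N" using odd by auto
  define h where "h = dim (Hom H S UNIV)"
  have hsum: "h = (\<Sum>k<N. if iso H S (Us ! k) then 1 else 0)"
  proof -
    have "h = sum_list (map (\<lambda>U. dim (Hom H S U)) Us)" unfolding h_def by (rule Hr.decomp_hdim[OF d iV sS])
    also have "\<dots> = (\<Sum>k<N. dim (Hom H S (Us ! k)))" unfolding sum_list_nth N_def ..
    also have "\<dots> = (\<Sum>k<N. if iso H S (Us ! k) then 1 else 0)"
      using hdim_irred[OF odd Sirr Uj oS] by simp
    finally show ?thesis .
  qed
  define c where "c j = {k\<in>{..<N}. iso H (Us ! j) (Us ! k)}" for j
  have card_c: "card (c j) = h" if j: "j < N" for j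
  proof -
    have oj: "odd (dim (Us ! j))" using dU[OF j] oS by simp
    have "card (c j) = (\<Sum>k<N. if iso H (Us ! j) (Us ! k) then 1 else 0)" unfolding c_def by (rule card_filter_sum)
    also have "\<dots> = (\<Sum>k<N. dim (Hom H (Us ! j) (Us ! k)))"
      using hdim_irred[OF odd Uj[OF j] Uj oj] by simp
    also have "\<dots> = sum_list (map (\<lambda>U. dim (Hom H (Us ! j) U)) Us)" unfolding sum_list_nth N_def ..
    also have "\<dots> = dim (Hom H (Us ! j) UNIV)" by (rule Hr.decomp_hdim[OF d iV irr_sub[OF Uj[OF j]], symmetric])
    also have "\<dots> = h"
    proof -
      obtain g where g: "g \<in> G" "iso H ((\<lambda>v. g *v v) ` S) (Us ! j)" using tr[OF j] by blast
      have "dim (Hom H ((\<lambda>v. g *v v) ` S) UNIV) = dim (Hom H (Us ! j) UNIV)"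
        by (rule hdim_iso_eq[OF g(2) irr_inv[OF tr_irr[OF g(1)]] irr_inv[OF Uj[OF j]]])
      then show ?thesis using hdim_tr_eq[OF g(1)] unfolding h_def by simp
    qed
    finally show ?thesis .
  qed
  have refl: "j \<in> c j" if "j < N" for j unfolding c_def using that iso_refl by blast
  have sub: "c j \<subseteq> {..<N}" for j unfolding c_def by blast
  have same: "c j1 = c j2" if "j1 < N" "j2 < N" "k \<in> c j1" "k \<in> c j2" for j1 j2 k
  proof -
    have k: "k < N" "iso H (Us ! j1) (Us ! k)" "iso H (Us ! j2) (Us ! k)" using that unfolding c_def by auto
    have i12: "iso H (Us ! j1) (Us ! j2)"
      using iso_trans[OF k(2) iso_sym[OF irr_inv[OF Uj[OF that(2)]] k(3)]] .
    have i21: "iso H (Us ! j2) (Us ! j1)" using iso_sym[OF irr_inv[OF Uj[OF that(1)]] i12] .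
    show ?thesis unfolding c_def using iso_trans[OF i12] iso_trans[OF i21] by blast
  qed
  define C where "C = c ` {..<N}"
  have "h * card C = card (\<Union>C)"
  proof (rule card_partition)
    show "finite C" unfolding C_def by simp
    show "finite (\<Union>C)" unfolding C_def using sub finite_subset by blast
    show "\<And>x. x \<in> C \<Longrightarrow> card x = h" unfolding C_def using card_c by auto
    show "\<And>c1 c2. c1 \<in> C \<Longrightarrow> c2 \<in> C \<Longrightarrow> c1 \<noteq> c2 \<Longrightarrow> c1 \<inter> c2 = {}"
      unfolding C_def using same by blast
  qed
  moreover have "\<Union>C = {..<N}" unfolding C_def using refl sub by blast
  ultimately have "h * card C = N" by simp
  then have "odd h" using oN by (metis even_mult_iff)
  then show ?thesis using oS unfolding h_def by simp
qed

end

(* ---- from d9/Main4.thy ---- *)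

lemma funpow_surj: fixes X :: "'a \<Rightarrow> 'a" assumes "surj X" shows "surj (X ^^ i)"
proof (induction i)
  case 0 then show ?case by (auto simp: surj_def funpow_0)
next
  case (Suc i)
  show ?case
  proof
    show "range (X ^^ Suc i) \<subseteq> UNIV" by simp
    show "UNIV \<subseteq> range (X ^^ Suc i)"
    proof
      fix v
      have "v \<in> range X" using assms by simp
      then obtain w where w: "v = X w" by blast
      have "w \<in> range (X ^^ i)" using Suc by simp
      then obtain w' where w': "w = (X ^^ i) w'" by blast
      have "(X ^^ Suc i) w' = v" using w w' by simp
      then show "v \<in> range (X ^^ Suc i)" by blast
    qed
  qed
qed

lemma funpow_finite_order:
  fixes X :: "'a \<Rightarrow> 'a"
  assumes fin: "finite Fs" and inF: "\<forall>i. X ^^ i \<in> Fs" and s: "surj X"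
  shows "\<exists>r>0. \<forall>v. (X ^^ r) v = v"
proof -
  have "\<not> inj (\<lambda>i. X ^^ i)"
  proof
    assume "inj (\<lambda>i. X ^^ i)"
    moreover have "range (\<lambda>i. X ^^ i) \<subseteq> Fs" using inF by blast
    then have "finite (range (\<lambda>i. X ^^ i))" using finite_subset fin by blast
    ultimately have "finite (UNIV :: nat set)" using finite_imageD by blast
    then show False by simp
  qed
  then obtain i1 i2 where ne: "i1 \<noteq> i2" and eq: "X ^^ i1 = X ^^ i2" unfolding inj_def by blast
  obtain a b where ab: "a < b" "X ^^ a = X ^^ b"
  proof (cases "i1 < i2")
    case True then show ?thesis using that eq by blast
  next
    case False then have "i2 < i1" using ne by simp
    then show ?thesis using that eq by metis
  qed
  have "X ^^ b = X ^^ (b - a) \<circ> X ^^ a" using funpow_add[of "b - a" a X] ab(1) by simp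
  then have key: "(X ^^ (b - a)) ((X ^^ a) w) = (X ^^ a) w" for w using ab(2) by (simp add: fun_eq_iff)
  have "(X ^^ (b - a)) v = v" for v
  proof -
    have "v \<in> range (X ^^ a)" using funpow_surj[OF s, of a] by simp
    then obtain w where "v = (X ^^ a) w" by blast
    then show ?thesis using key by simp
  qed
  then show ?thesis using ab(1) by (intro exI[of _ "b - a"]) auto
qed

lemma GL_matrix:
  fixes f :: "real^'n \<Rightarrow> real^'n"
  assumes "GL_on UNIV f"
  shows "linear f" "invertible (matrix f)" "\<And>v. f v = matrix f *v v"
proof -
  show lf: "linear f" using assms unfolding GL_on_def by blast
  have "inj f" using assms unfolding GL_on_def by blast
  then have "det (matrix f) \<noteq> 0" using det_nz_iff_inj[OF lf] by blast
  then show "invertible (matrix f)" using invertible_det_nz by blast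
  show "\<And>v. f v = matrix f *v v" using mw[OF lf] by simp
qed


(* ---- from d10/Main5.thy ---- *)

locale setting2 = setting +
  fixes f :: "real^'n \<Rightarrow> real^'n"
  assumes GL: "GL_on UNIV f" and fo: "finite_order_on UNIV f" and nz: "normalizes_on UNIV f G"
begin

lemma linf: "linear f" and invF: "invertible (matrix f)" and fF: "f v = matrix f *v v"
  using GL_matrix[OF GL] by auto

lemma Fconj:
  assumes k: "k \<in> G" "k' \<in> G" "\<forall>x. f (k *v x) = k' *v f x"
  shows "matrix f ** k ** matrix_inv (matrix f) = k'"
proof (rule matrix_eqI)
  fix v
  have "(matrix f ** k ** matrix_inv (matrix f)) *v v = f (k *v (matrix_inv (matrix f) *v v))"
    by (simp flip: matrix_vector_mul_assoc add: fF)
  also have "\<dots> = k' *v f (matrix_inv (matrix f) *v v)" using k(3) by blast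
  also have "\<dots> = k' *v v" by (simp add: fF mv_inv[OF invF])
  finally show "(matrix f ** k ** matrix_inv (matrix f)) *v v = k' *v v" .
qed

lemma Fin: "k \<in> G \<Longrightarrow> matrix f ** k ** matrix_inv (matrix f) \<in> G"
  using nz Fconj unfolding normalizes_on_def by (metis UNIV_I)

lemma Fonto: "\<forall>k'\<in>G. \<exists>k\<in>G. matrix f ** k ** matrix_inv (matrix f) = k'"
proof
  fix k' assume "k' \<in> G"
  then obtain k where "k \<in> G" "\<forall>x\<in>UNIV. f (k *v x) = k' *v f x" using nz unfolding normalizes_on_def by blast
  then show "\<exists>k\<in>G. matrix f ** k ** matrix_inv (matrix f) = k'" using Fconj \<open>k' \<in> G\<close> by blast
qed

lemma nF: "nrm H (matrix f)"
  by (rule char_nrm[OF Hc invF]) (use Fin Fonto in auto)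

lemma x_finite_order:
  assumes g: "g \<in> G"
  shows "\<exists>r>0. \<forall>v. ((\<lambda>v. (matrix_inv g ** matrix f) *v v) ^^ r) v = v"
proof -
  obtain m where m: "m > 0" "\<forall>x. (f ^^ m) x = x" using fo unfolding finite_order_on_def by blast
  define x where "x = matrix_inv g ** matrix f"
  define X where "X v = x *v v" for v
  define Fs where "Fs = (\<lambda>(y, j). (\<lambda>v. y *v ((f ^^ j) v))) ` (G \<times> {..<m})"
  have fin: "finite Fs" unfolding Fs_def using Gf by simp
  have claim: "\<exists>y\<in>G. \<exists>j<m. \<forall>v. (X ^^ i) v = y *v ((f ^^ j) v)" for i
  proof (induction i)
    case 0
    show ?case using m(1) Gr.one_in by (intro bexI[of _ "mat 1"] exI[of _ 0]) auto
  next
    case (Suc i)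
    then obtain y j where y: "y \<in> G" "j < m" "\<forall>v. (X ^^ i) v = y *v ((f ^^ j) v)" by blast
    define y' where "y' = matrix f ** y ** matrix_inv (matrix f)"
    have y'G: "y' \<in> G" unfolding y'_def using Fin[OF y(1)] .
    have gy: "matrix_inv g ** y' \<in> G" using Gr.mul_in[OF Gr.inv_in[OF g] y'G] .
    have step: "(X ^^ Suc i) v = (matrix_inv g ** y') *v ((f ^^ Suc j) v)" for v
    proof -
      have "(X ^^ Suc i) v = x *v (y *v ((f ^^ j) v))" using y(3) unfolding X_def by simp
      also have "\<dots> = (matrix_inv g ** y') *v (matrix f *v ((f ^^ j) v))"
        unfolding x_def y'_def by (simp flip: matrix_vector_mul_assoc add: mv_inv[OF invF])
      also have "\<dots> = (matrix_inv g ** y') *v ((f ^^ Suc j) v)" by (simp add: fF)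
      finally show ?thesis .
    qed
    show ?case
    proof (cases "Suc j < m")
      case True then show ?thesis using step gy by blast
    next
      case False
      then have "Suc j = m" using y(2) by simp
      then have "(X ^^ Suc i) v = (matrix_inv g ** y') *v ((f ^^ 0) v)" for v using step m(2) by simp
      then show ?thesis using gy m(1) by blast
    qed
  qed
  have inF: "\<forall>i. X ^^ i \<in> Fs"
  proof
    fix i
    obtain y j where y: "y \<in> G" "j < m" "\<forall>v. (X ^^ i) v = y *v ((f ^^ j) v)" using claim by blast
    have "X ^^ i = (\<lambda>v. y *v ((f ^^ j) v))" using y(3) by (simp add: fun_eq_iff)
    then show "X ^^ i \<in> Fs" unfolding Fs_def using y(1,2) by force
  qed
  have xi: "invertible x" unfolding x_def invertible_def
    using minv[OF invF] minv[OF Gr.invertible_in[OF g]]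
    by (intro exI[of _ "matrix_inv (matrix f) ** g"])
       (simp add: matrix_eq flip: matrix_vector_mul_assoc)
  have "surj X"
  proof -
    have "X (matrix_inv x *v v) = v" for v unfolding X_def using mv_inv(2)[OF xi] .
    then show ?thesis by (metis surjI)
  qed
  then show ?thesis using funpow_finite_order[OF fin inF] unfolding X_def x_def by blast
qed

end

(* ---- from d11/Main6.thy ---- *)

context setting2 begin

lemma E1_main:
  assumes E1: "E1_pair H S"
  shows "E1_triple G UNIV f"
proof -
  define F where "F = matrix f"
  have Fi: "invertible F" unfolding F_def by (rule invF)
  have fFv: "f v = F *v v" for v unfolding F_def by (rule fF)
  have nF': "nrm H F" unfolding F_def by (rule nF)
  define fS where "fS = (\<lambda>v. F *v v) ` S"
  have fS_irr: "irreducible_submodule H fS" unfolding fS_def by (rule img_irr[OF Sirr nF'])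
  obtain P where P: "eqproj H fS P" using Hr.maschke[OF irr_inv[OF fS_irr]] by blast
  have fS0: "fS \<noteq> {0}" using fS_irr unfolding irreducible_submodule_def by blast
  obtain g s0 where g: "g \<in> G" "s0 \<in> S" "P (g *v s0) \<noteq> 0"
    using proj_hits[OF P fS0 irr_sub[OF fS_irr]] by blast
  define gi where "gi = matrix_inv g"
  have ginv: "invertible g" using Gr.invertible_in[OF g(1)] .
  have ng: "nrm H g" using nrm_G[OF g(1)] .
  have Pl: "linear P" "\<forall>v. P v \<in> fS" "\<forall>k\<in>H. \<forall>v. P (k *v v) = k *v P v" using P unfolding eqproj_def by auto
  define z where "z v = P (g *v v)" for v
  have linz: "linear z" unfolding z_def using linear_compose[OF matrix_vector_mul_linear Pl(1)] by (simp add: o_def)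
  have twz: "\<forall>k\<in>H. \<forall>v\<in>S. z (k *v v) = (g ** k ** matrix_inv g) *v z v"
  proof (intro ballI)
    fix k v assume k: "k \<in> H" and v: "v \<in> S"
    have "z (k *v v) = P ((g ** k ** matrix_inv g) *v (g *v v))" unfolding z_def using nrm_twist[OF ng k] by simp
    also have "\<dots> = (g ** k ** matrix_inv g) *v z v" unfolding z_def using Pl(3) nrm_conj_in[OF ng k] by blast
    finally show "z (k *v v) = (g ** k ** matrix_inv g) *v z v" .
  qed
  have "z ` S \<subseteq> fS" unfolding z_def using Pl(2) by blast
  moreover have "\<exists>v\<in>S. z v \<noteq> 0" unfolding z_def using g by blast
  ultimately have zS: "z ` S = fS \<and> inj_on z S"
    using schur_iso[OF Sirr fS_irr linz twz nrm_surj[OF ng]] by blast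
  define u where "u v = matrix_inv F *v z v" for v
  have linu: "linear u" unfolding u_def using linear_compose[OF linz matrix_vector_mul_linear] by (simp add: o_def)
  have uS: "u ` S = S"
  proof -
    have "u ` S = (\<lambda>w. matrix_inv F *v w) ` (z ` S)" unfolding u_def by (simp add: image_image)
    also have "\<dots> = (\<lambda>w. matrix_inv F *v w) ` fS" using zS by simp
    also have "\<dots> = S" unfolding fS_def using mv_inv(1)[OF Fi] by (force simp: image_image)
    finally show ?thesis .
  qed
  have uinj: "inj_on u S"
  proof (rule inj_onI)
    fix a b assume ab: "a \<in> S" "b \<in> S" "u a = u b"
    then have "F *v u a = F *v u b" by simp
    then have "z a = z b" unfolding u_def using mv_inv(2)[OF Fi] by simp
    then show "a = b" using zS ab(1,2) inj_onD by metis
  qed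
  define \<tau> where "\<tau> k = matrix_inv F ** (g ** k ** matrix_inv g) ** F" for k
  have \<tau>H: "\<tau> k \<in> H" if "k \<in> H" for k
    unfolding \<tau>_def using nrm_conj_in'[OF nF' nrm_conj_in[OF ng that]] .
  have twu: "u (k *v v) = \<tau> k *v u v" if "k \<in> H" "v \<in> S" for k v
  proof -
    have "u (k *v v) = matrix_inv F *v ((g ** k ** matrix_inv g) *v z v)" unfolding u_def using twz that by simp
    also have "\<dots> = \<tau> k *v u v" unfolding \<tau>_def u_def
      by (simp flip: matrix_vector_mul_assoc add: mv_inv(2)[OF Fi])
    finally show ?thesis .
  qed
  define x where "x = matrix_inv g ** F"
  have x\<tau>: "x ** \<tau> k = k ** x" for k
    unfolding x_def \<tau>_def
    by (rule matrix_eqI) (simp flip: matrix_vector_mul_assoc add: mv_inv[OF Fi] mv_inv[OF ginv])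
  have xinv: "invertible x" unfolding x_def invertible_def
    using minv[OF Fi] minv[OF ginv]
    by (intro exI[of _ "matrix_inv F ** g"]) (simp add: matrix_eq flip: matrix_vector_mul_assoc)
  obtain p where p: "linear p" "\<forall>v. p v \<in> S" "\<forall>t\<in>S. p t = t" "\<forall>v. (\<forall>t\<in>S. orthogonal t v) \<longrightarrow> p v = 0"
    using orth_proj_full[OF sS] by blast
  define Wm where "Wm = matrix (\<lambda>v. u (p v))"
  have linup: "linear (\<lambda>v. u (p v))" using linear_compose[OF p(1) linu] by (simp add: o_def)
  define T where "T M = x ** M ** Wm" for M
  have Tv: "T M *v v = x *v (M *v u (p v))" for M v
    unfolding T_def Wm_def by (simp flip: matrix_vector_mul_assoc add: mw[OF linup])
  have linT: "linear T"
  proof (rule linearI)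
    fix a b show "T (a + b) = T a + T b"
      by (rule matrix_eqI) (simp add: Tv mv_addl matrix_vector_right_distrib)
  next
    fix r a show "T (r *\<^sub>R a) = r *\<^sub>R T a"
      by (rule matrix_eqI) (simp add: Tv mv_scalel matrix_vector_mult_scaleR)
  qed
  define E where "E = Hom H S UNIV"
  have sE: "subspace E" unfolding E_def by (rule Hom_subspace[OF subspace_UNIV])
  have oE: "odd (dim E)" unfolding E_def using counting by blast
  have TE: "\<forall>M\<in>E. T M \<in> E"
  proof
    fix M assume M: "M \<in> E"
    have "\<forall>k\<in>H. \<forall>v\<in>S. T M *v (k *v v) = k *v (T M *v v)"
    proof (intro ballI)
      fix k v assume k: "k \<in> H" and v: "v \<in> S"
      have kv: "k *v v \<in> S" using inv_mem[OF irr_inv[OF Sirr] k v] .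
      have uv: "u v \<in> S" using uS v by blast
      have "T M *v (k *v v) = x *v (M *v u (k *v v))" using Tv p(3) kv by simp
      also have "\<dots> = x *v (M *v (\<tau> k *v u v))" using twu[OF k v] by simp
      also have "\<dots> = x *v (\<tau> k *v (M *v u v))" using M \<tau>H[OF k] uv unfolding E_def Hom_def by simp
      also have "\<dots> = k *v (x *v (M *v u v))" using x\<tau>[of k] by (metis matrix_vector_mul_assoc)
      also have "\<dots> = k *v (T M *v v)" using Tv p(3) v by simp
      finally show "T M *v (k *v v) = k *v (T M *v v)" .
    qed
    moreover have "\<forall>v. (\<forall>t\<in>S. orthogonal t v) \<longrightarrow> T M *v v = 0"
      using p(4) Tv linear_0[OF linu] by simp
    ultimately show "T M \<in> E" unfolding E_def Hom_def by simp
  qed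
  obtain M c where M: "M \<in> E" "M \<noteq> 0" "T M = c *\<^sub>R M"
    using odd_eigen_mat[OF linT odd sE oE TE] by blast
  have Mh: "\<forall>k\<in>H. \<forall>v\<in>S. M *v (k *v v) = k *v (M *v v)" using M(1) unfolding E_def Hom_def by simp
  have Mv: "x *v (M *v u v) = c *\<^sub>R (M *v v)" if "v \<in> S" for v
  proof -
    have "T M *v v = (c *\<^sub>R M) *v v" using M(3) by simp
    then show ?thesis using Tv p(3) that by (simp add: mv_scalel)
  qed
  have "\<exists>v\<in>S. M *v v \<noteq> 0"
  proof (rule ccontr)
    assume "\<not> ?thesis"
    then have "M = 0" using mat_zero_on[OF sS, of M] M(1) unfolding E_def Hom_def by blast
    then show False using M(2) by simp
  qed
  then have Minj: "inj_on (\<lambda>v. M *v v) S"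
    using schur_inj[OF Sirr matrix_vector_mul_linear, where \<sigma>="\<lambda>k. k"] Mh by simp
  define P' where "P' = (\<lambda>v. M *v v) ` S"
  have xP': "x *v w \<in> P'" if wP: "w \<in> P'" for w
  proof -
    obtain s where s: "s \<in> S" "w = M *v s" using wP unfolding P'_def by blast
    then obtain t where t: "t \<in> S" "s = u t" using uS by blast
    have "x *v w = M *v (c *\<^sub>R t)" using Mv[OF t(1)] s t by (simp add: matrix_vector_mult_scaleR)
    moreover have "c *\<^sub>R t \<in> S" using sS t(1) by (simp add: subspace_scale)
    ultimately show ?thesis unfolding P'_def by blast
  qed
  have S0: "0 \<in> S" using sS by (simp add: subspace_0)
  have c0: "c \<noteq> 0"
  proof
    assume c: "c = 0"
    have "S \<noteq> {0}" using Sirr unfolding irreducible_submodule_def by blast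
    then obtain t where t: "t \<in> S" "t \<noteq> 0" using S0 by blast
    have ut: "u t \<in> S" "u t \<noteq> 0"
      using uS t uinj S0 linear_0[OF linu] inj_onD by (blast, metis)
    have "M *v u t \<noteq> 0" using Minj ut S0 inj_onD matrix_vector_mult_0_right by metis
    then have "x *v (M *v u t) \<noteq> 0" using mv_inv(1)[OF xinv] by (metis matrix_vector_mult_0_right)
    then show False using Mv[OF t(1)] c by simp
  qed
  obtain \<psi> where \<psi>: "linear \<psi>" "\<forall>s\<in>S. \<psi> (M *v s) = s"
    using left_inv_on[OF matrix_vector_mul_linear sS Minj] by blast
  have M\<psi>: "M *v \<psi> w = w" if "w \<in> P'" for w using that \<psi>(2) unfolding P'_def by auto
  have \<psi>eq: "\<psi> (k *v w) = k *v \<psi> w" if wk: "w \<in> P'" "k \<in> H" for w k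
  proof -
    obtain s where s: "s \<in> S" "w = M *v s" using wk unfolding P'_def by blast
    have "k *v w = M *v (k *v s)" using Mh wk(2) s by simp
    then show ?thesis using \<psi>(2) s inv_mem[OF irr_inv[OF Sirr] wk(2) s(1)] by simp
  qed
  define f' where "f' v = \<psi> (x *v (M *v v))" for v
  have linf': "linear f'" unfolding f'_def
    using linear_compose[OF linear_compose[OF matrix_vector_mul_linear matrix_vector_mul_linear] \<psi>(1)]
    by (simp add: o_def)
  have f'u: "f' (u t) = c *\<^sub>R t" if "t \<in> S" for t
  proof -
    have "f' (u t) = \<psi> (M *v (c *\<^sub>R t))" unfolding f'_def using Mv[OF that] by (simp add: matrix_vector_mult_scaleR)
    also have "\<dots> = c *\<^sub>R t" using \<psi>(2) sS that by (simp add: subspace_scale)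
    finally show ?thesis .
  qed
  have MsP: "M *v s \<in> P'" if "s \<in> S" for s unfolding P'_def using that by blast
  have GLf': "GL_on S f'"
    unfolding GL_on_def
  proof (intro conjI)
    show "linear f'" by (rule linf')
    show "f' ` S = S"
    proof
      show "f' ` S \<subseteq> S"
      proof
        fix y assume "y \<in> f' ` S"
        then obtain s where s: "s \<in> S" "y = f' s" by blast
        then obtain t where t: "t \<in> S" "s = u t" using uS by blast
        show "y \<in> S" using s t f'u sS by (simp add: subspace_scale)
      qed
      show "S \<subseteq> f' ` S"
      proof
        fix s assume s: "s \<in> S"
        have t: "(1/c) *\<^sub>R s \<in> S" using sS s by (simp add: subspace_scale)
        have "f' (u ((1/c) *\<^sub>R s)) = s" using f'u[OF t] c0 by simp
        moreover have "u ((1/c) *\<^sub>R s) \<in> S" using uS t by blast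
        ultimately show "s \<in> f' ` S" by (metis image_eqI)
      qed
    qed
    show "inj_on f' S"
    proof (rule inj_onI)
      fix a b assume ab: "a \<in> S" "b \<in> S" "f' a = f' b"
      obtain ta where ta: "ta \<in> S" "a = u ta" using uS ab(1) by blast
      obtain tb where tb: "tb \<in> S" "b = u tb" using uS ab(2) by blast
      have "c *\<^sub>R ta = c *\<^sub>R tb" using f'u ta tb ab(3) by simp
      then have "ta = tb" using c0 by simp
      then show "a = b" using ta tb by simp
    qed
  qed
  obtain r where r: "r > 0" "\<forall>v. ((\<lambda>v. x *v v) ^^ r) v = v"
    using x_finite_order[OF g(1)] unfolding x_def F_def by blast
  have iter: "(f' ^^ i) s = \<psi> (((\<lambda>v. x *v v) ^^ i) (M *v s)) \<and> ((\<lambda>v. x *v v) ^^ i) (M *v s) \<in> P'"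
    if s: "s \<in> S" for s i
  proof (induction i)
    case 0
    then show ?case using \<psi>(2) s MsP by simp
  next
    case (Suc i)
    define w where "w = ((\<lambda>v. x *v v) ^^ i) (M *v s)"
    have w: "(f' ^^ i) s = \<psi> w" "w \<in> P'" using Suc unfolding w_def by auto
    have "(f' ^^ Suc i) s = \<psi> (x *v w)" using w M\<psi>[OF w(2)] unfolding f'_def by simp
    moreover have "((\<lambda>v. x *v v) ^^ Suc i) (M *v s) = x *v w" unfolding w_def by simp
    ultimately show ?case using xP'[OF w(2)] by simp
  qed
  have fo': "finite_order_on S f'"
    unfolding finite_order_on_def using r iter \<psi>(2) by (intro exI[of _ r]) auto
  have gen: "\<forall>s\<in>S. f' (k *v s) = k'' *v f' s" if k: "k \<in> H" "k'' \<in> H" "x ** k = k'' ** x" for k k''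
  proof
    fix s assume s: "s \<in> S"
    have "f' (k *v s) = \<psi> (x *v (k *v (M *v s)))" unfolding f'_def using Mh k(1) s by simp
    also have "\<dots> = \<psi> (k'' *v (x *v (M *v s)))" using k(3) by (metis matrix_vector_mul_assoc)
    also have "\<dots> = k'' *v f' s" unfolding f'_def using \<psi>eq[OF xP'[OF MsP[OF s]] k(2)] .
    finally show "f' (k *v s) = k'' *v f' s" .
  qed
  have nrm': "normalizes_on S f' H"
    unfolding normalizes_on_def
  proof (intro conjI ballI)
    fix k assume k: "k \<in> H"
    define k'' where "k'' = matrix_inv g ** (F ** k ** matrix_inv F) ** g"
    have k''H: "k'' \<in> H" unfolding k''_def using nrm_conj_in'[OF ng nrm_conj_in[OF nF' k]] .
    have "x ** k = k'' ** x" unfolding x_def k''_def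
      by (rule matrix_eqI) (simp flip: matrix_vector_mul_assoc add: mv_inv[OF Fi] mv_inv[OF ginv])
    then show "\<exists>k'\<in>H. \<forall>s\<in>S. f' (k *v s) = k' *v f' s" using gen[OF k k''H] k''H by blast
  next
    fix k' assume k': "k' \<in> H"
    show "\<exists>k\<in>H. \<forall>s\<in>S. f' (k *v s) = k' *v f' s" using gen[OF \<tau>H[OF k'] k' x\<tau>] \<tau>H[OF k'] by blast
  qed
  have "E1_triple H S f'" using E1 GLf' fo' nrm' unfolding E1_pair_def by blast
  then obtain k s where ks: "k \<in> H" "s \<in> S" "s \<noteq> 0" "k *v f' s = s" unfolding E1_triple_def by blast
  have f's: "f' s \<in> S" using GLf' ks(2) unfolding GL_on_def by blast
  have "M *v s = M *v (k *v f' s)" using ks(4) by simp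
  also have "\<dots> = k *v (M *v f' s)" using Mh ks(1) f's by simp
  also have "\<dots> = k *v (x *v (M *v s))" unfolding f'_def using M\<psi>[OF xP'[OF MsP[OF ks(2)]]] by simp
  finally have fix1: "k *v (x *v (M *v s)) = M *v s" by simp
  have nz0: "M *v s \<noteq> 0" using Minj ks(2,3) S0 inj_onD matrix_vector_mult_0_right by metis
  have kg: "k ** matrix_inv g \<in> G" using Gr.mul_in[OF _ Gr.inv_in[OF g(1)]] HG(1) ks(1) by blast
  have "(k ** matrix_inv g) *v f (M *v s) = M *v s"
    using fix1 unfolding x_def fFv by (simp flip: matrix_vector_mul_assoc)
  then show ?thesis unfolding E1_triple_def using kg nz0 by blast
qed

end

theorem lemma3:
  fixes G H :: "(real^'n^'n) set" and S :: "(real^'n) set"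
  assumes "odd CARD('n)"
    and "matrix_group G" and "finite G"
    and "irreducible_submodule G UNIV"
    and "characteristic_subgroup H G"
    and "irreducible_submodule H S"
    and "E1_pair H S"
  shows "E1_pair G UNIV"
proof -
  interpret setting G H S using assms(1-6) by unfold_locales
  show ?thesis unfolding E1_pair_def
  proof (intro allI impI)
    fix f :: "real^'n \<Rightarrow> real^'n"
    assume a: "GL_on UNIV f \<and> finite_order_on UNIV f \<and> normalizes_on UNIV f G"
    interpret setting2 G H S f using a by unfold_locales auto
    show "E1_triple G UNIV f" by (rule E1_main[OF assms(7)])
  qed
qed

end
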